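(* If $f\colon A\to B$ is an anodyne extension of simplicial sets, then the map $\hat Cf\colon B\sqcup_A CA\to CB$ (induced by $j_B\colon B\to CB$ and $Cf\colon CA\to CB$) is a right anodyne extension.
   Context: An anodyne extension is a map of simplicial sets with the left lifting property with respect to all Kan fibrations. A right fibration is a map with the right lifting property with respect to all horn inclusions $\Lambda^k[n]\to\Delta[n]$ with $n\ge1$ and $0<k\le n$ ($\Lambda^k[n]$ the horn omitting the face opposite vertex $k$); a right anodyne extension is a map with the left lifting property with respect to all right fibrations. Cone construction: let $\Delta^-$ be the category of ordered sets $[n]=\{0,\dots,n\}$ for $n\ge-1$ ($[-1]=\emptyset$) and order-preserving maps; extend a simplicial set $A$ to $\Delta^-$ by $A_{-1}=$ a point. Let $C\Delta\colon\Delta^-\to$ (based simplicial sets) send $[n]$ to $\Delta[n+1]$ based at vertex $0$, and $f\colon[m]\to[n]$ to the map induced by $\bar f\colon[m+1]\to[n+1]$, $\bar f(0)=0$, $\bar f(k)=f(k-1)+1$ for $k>0$. Then $CA=\int^{n\in\Delta^-}A_n\times C\Delta[n]$ (adding a cone point to every simplex, all cone points identified to a base vertex). The natural inclusion $j_A\colon A\to CA$ is induced by $\delta_0\colon\Delta[n]\to\Delta[n+1]$, the inclusion of the face opposite $0$. *)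

theory Defs
  imports Main
begin

text \<open>An operator [m] -> [n] of the simplex category is represented by a function
  nat => nat which is monotone on {0..m}, maps {0..m} into {0..n}, and is 0 outside
  {0..m} (canonical representative).\<close>

definition simp_ops :: "nat \<Rightarrow> nat \<Rightarrow> (nat \<Rightarrow> nat) set" where
  "simp_ops m n = {\<theta>. (\<forall>i j. i \<le> j \<longrightarrow> j \<le> m \<longrightarrow> \<theta> i \<le> \<theta> j)
                      \<and> (\<forall>i\<le>m. \<theta> i \<le> n) \<and> (\<forall>i>m. \<theta> i = 0)}"

definition cmp :: "nat \<Rightarrow> (nat \<Rightarrow> nat) \<Rightarrow> (nat \<Rightarrow> nat) \<Rightarrow> (nat \<Rightarrow> nat)" where
  "cmp m \<theta> \<phi> = (\<lambda>i. if i \<le> m then \<theta> (\<phi> i) else 0)"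

definition idop :: "nat \<Rightarrow> (nat \<Rightarrow> nat)" where
  "idop n = (\<lambda>i. if i \<le> n then i else 0)"

text \<open>cells X n is the set of n-simplices; act X m n theta x is X(theta)(x) for
  theta : [m] -> [n] and x an n-simplex.\<close>
record 'a sset =
  cells :: "nat \<Rightarrow> 'a set"
  act :: "nat \<Rightarrow> nat \<Rightarrow> (nat \<Rightarrow> nat) \<Rightarrow> 'a \<Rightarrow> 'a"

definition is_sset :: "'a sset \<Rightarrow> bool" where
  "is_sset X \<longleftrightarrow>
     (\<forall>m n \<theta> x. \<theta> \<in> simp_ops m n \<longrightarrow> x \<in> cells X n \<longrightarrow> act X m n \<theta> x \<in> cells X m)
   \<and> (\<forall>n x. x \<in> cells X n \<longrightarrow> act X n n (idop n) x = x)
   \<and> (\<forall>l m n \<phi> \<theta> x. \<phi> \<in> simp_ops l m \<longrightarrow> \<theta> \<in> simp_ops m n \<longrightarrow> x \<in> cells X n \<longrightarrow>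
        act X l m \<phi> (act X m n \<theta> x) = act X l n (cmp l \<theta> \<phi>) x)"

definition smap :: "'a sset \<Rightarrow> 'b sset \<Rightarrow> (nat \<Rightarrow> 'a \<Rightarrow> 'b) \<Rightarrow> bool" where
  "smap X Y f \<longleftrightarrow>
     (\<forall>n x. x \<in> cells X n \<longrightarrow> f n x \<in> cells Y n)
   \<and> (\<forall>m n \<theta> x. \<theta> \<in> simp_ops m n \<longrightarrow> x \<in> cells X n \<longrightarrow>
        f m (act X m n \<theta> x) = act Y m n \<theta> (f n x))"

definition llp :: "'a sset \<Rightarrow> 'b sset \<Rightarrow> (nat \<Rightarrow> 'a \<Rightarrow> 'b) \<Rightarrow>
                   'x sset \<Rightarrow> 'y sset \<Rightarrow> (nat \<Rightarrow> 'x \<Rightarrow> 'y) \<Rightarrow> bool" where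
  "llp A B i X Y p \<longleftrightarrow>
     (\<forall>u v. smap A X u \<longrightarrow> smap B Y v \<longrightarrow>
        (\<forall>n a. a \<in> cells A n \<longrightarrow> p n (u n a) = v n (i n a)) \<longrightarrow>
        (\<exists>h. smap B X h
             \<and> (\<forall>n a. a \<in> cells A n \<longrightarrow> h n (i n a) = u n a)
             \<and> (\<forall>n b. b \<in> cells B n \<longrightarrow> p n (h n b) = v n b)))"

definition simplex :: "nat \<Rightarrow> (nat \<Rightarrow> nat) sset" where
  "simplex n = \<lparr>cells = (\<lambda>m. simp_ops m n), act = (\<lambda>m k \<phi> \<theta>. cmp m \<theta> \<phi>)\<rparr>"

definition horn :: "nat \<Rightarrow> nat \<Rightarrow> (nat \<Rightarrow> nat) sset" where
  "horn n k = \<lparr>cells = (\<lambda>m. {\<theta> \<in> simp_ops m n. \<not> ({0..n} - {k} \<subseteq> \<theta> ` {0..m})}),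
               act = (\<lambda>m l \<phi> \<theta>. cmp m \<theta> \<phi>)\<rparr>"

definition horn_incl :: "nat \<Rightarrow> (nat \<Rightarrow> nat) \<Rightarrow> (nat \<Rightarrow> nat)" where
  "horn_incl m \<theta> = \<theta>"

definition kan_fibration :: "'x sset \<Rightarrow> 'y sset \<Rightarrow> (nat \<Rightarrow> 'x \<Rightarrow> 'y) \<Rightarrow> bool" where
  "kan_fibration X Y p \<longleftrightarrow> is_sset X \<and> is_sset Y \<and> smap X Y p \<and>
     (\<forall>n k. 1 \<le> n \<longrightarrow> k \<le> n \<longrightarrow> llp (horn n k) (simplex n) horn_incl X Y p)"

definition right_fibration :: "'x sset \<Rightarrow> 'y sset \<Rightarrow> (nat \<Rightarrow> 'x \<Rightarrow> 'y) \<Rightarrow> bool" where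
  "right_fibration X Y p \<longleftrightarrow> is_sset X \<and> is_sset Y \<and> smap X Y p \<and>
     (\<forall>n k. 1 \<le> n \<longrightarrow> 0 < k \<longrightarrow> k \<le> n \<longrightarrow> llp (horn n k) (simplex n) horn_incl X Y p)"

text \<open>HOL cannot quantify over types inside a formula, so the class of test fibrations is
  taken among simplicial sets whose simplices live in the types given by the
  itself-arguments.\<close>
definition anodyne :: "'x itself \<Rightarrow> 'y itself \<Rightarrow> 'a sset \<Rightarrow> 'b sset \<Rightarrow> (nat \<Rightarrow> 'a \<Rightarrow> 'b) \<Rightarrow> bool" where
  "anodyne _ _ A B f \<longleftrightarrow> is_sset A \<and> is_sset B \<and> smap A B f \<and>
     (\<forall>(X::'x sset) (Y::'y sset) p. kan_fibration X Y p \<longrightarrow> llp A B f X Y p)"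

definition right_anodyne :: "'x itself \<Rightarrow> 'y itself \<Rightarrow> 'a sset \<Rightarrow> 'b sset \<Rightarrow> (nat \<Rightarrow> 'a \<Rightarrow> 'b) \<Rightarrow> bool" where
  "right_anodyne _ _ A B f \<longleftrightarrow> is_sset A \<and> is_sset B \<and> smap A B f \<and>
     (\<forall>(X::'x sset) (Y::'y sset) p. right_fibration X Y p \<longrightarrow> llp A B f X Y p)"

section \<open>The cone construction  CA = coend over Delta^- of A_n x C Delta[n]\<close>

text \<open>A representative of the coend is (m, k, ao, sigma): the index n = k - 1 in Delta^-
  (k = 0 means n = -1), ao = None if k = 0 (A_{-1} is a point) and ao = Some a with
  a in A_{k-1} otherwise, and sigma an m-simplex of C Delta[n] = Delta[k].\<close>
type_synonym 'a cone_rep = "nat \<times> nat \<times> 'a option \<times> (nat \<Rightarrow> nat)"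
type_synonym 'a cone_elt = "'a cone_rep set"

definition cone_pre :: "'a sset \<Rightarrow> nat \<Rightarrow> 'a cone_rep set" where
  "cone_pre A m = {(m', k, ao, \<sigma>). m' = m \<and> \<sigma> \<in> simp_ops m k \<and>
       (if k = 0 then ao = None else (\<exists>a. ao = Some a \<and> a \<in> cells A (k - 1)))}"

text \<open>The maps C Delta(f) for f : [p-1] -> [q-1] in Delta^- are exactly the operators
  g : [p] -> [q] with g^{-1}(0) = {0}; f is recovered by uncone.\<close>
definition cone_op :: "nat \<Rightarrow> nat \<Rightarrow> (nat \<Rightarrow> nat) \<Rightarrow> bool" where
  "cone_op p q g \<longleftrightarrow> g \<in> simp_ops p q \<and> g 0 = 0 \<and> (\<forall>i. 1 \<le> i \<longrightarrow> i \<le> p \<longrightarrow> 1 \<le> g i)"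

definition uncone :: "nat \<Rightarrow> (nat \<Rightarrow> nat) \<Rightarrow> (nat \<Rightarrow> nat)" where
  "uncone p g = (\<lambda>i. if i + 1 \<le> p then g (i + 1) - 1 else 0)"

text \<open>Generating relation of the coend: (a, C(f) o sigma) ~ (f^* a, sigma).\<close>
definition cone_gen :: "'a sset \<Rightarrow> ('a cone_rep \<times> 'a cone_rep) set" where
  "cone_gen A = {((m, q, Some a, cmp m g \<sigma>),
                  (m, p, (if p = 0 then None else Some (act A (p - 1) (q - 1) (uncone p g) a)), \<sigma>))
                 | m p q g \<sigma> a. cone_op p q g \<and> \<sigma> \<in> simp_ops m p \<and> 1 \<le> q \<and> a \<in> cells A (q - 1)}"

definition cone_rel :: "'a sset \<Rightarrow> ('a cone_rep \<times> 'a cone_rep) set" where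
  "cone_rel A = (cone_gen A \<union> (cone_gen A)\<inverse>)\<^sup>*"

definition cone_act :: "'a sset \<Rightarrow> nat \<Rightarrow> nat \<Rightarrow> (nat \<Rightarrow> nat) \<Rightarrow> 'a cone_elt \<Rightarrow> 'a cone_elt" where
  "cone_act A m' m \<phi> c = (case (SOME x. x \<in> c) of (_, k, ao, \<sigma>) \<Rightarrow>
       cone_rel A `` {(m', k, ao, cmp m' \<sigma> \<phi>)})"

definition cone :: "'a sset \<Rightarrow> 'a cone_elt sset" where
  "cone A = \<lparr>cells = (\<lambda>m. cone_pre A m // cone_rel A), act = cone_act A\<rparr>"

text \<open>j_A : A -> CA, induced by delta_0 : Delta[n] -> Delta[n+1].\<close>
definition cone_incl :: "'a sset \<Rightarrow> nat \<Rightarrow> 'a \<Rightarrow> 'a cone_elt" where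
  "cone_incl A n a = cone_rel A `` {(n, Suc n, Some a, (\<lambda>i. if i \<le> n then Suc i else 0))}"

definition cone_map :: "'b sset \<Rightarrow> (nat \<Rightarrow> 'a \<Rightarrow> 'b) \<Rightarrow> nat \<Rightarrow> 'a cone_elt \<Rightarrow> 'b cone_elt" where
  "cone_map B f m c = (case (SOME x. x \<in> c) of (m', k, ao, \<sigma>) \<Rightarrow>
       cone_rel B `` {(m', k, map_option (f (k - 1)) ao, \<sigma>)})"

text \<open>Pushout of B <-g- A -h-> C, computed degreewise; an element is an equivalence
  class of tagged simplices (degree, Inl b or Inr c).\<close>
type_synonym ('b, 'c) po_elt = "(nat \<times> ('b + 'c)) set"

definition po_pre :: "'b sset \<Rightarrow> 'c sset \<Rightarrow> nat \<Rightarrow> (nat \<times> ('b + 'c)) set" where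
  "po_pre B C m = {(m, Inl b) | b. b \<in> cells B m} \<union> {(m, Inr c) | c. c \<in> cells C m}"

definition po_rel :: "'a sset \<Rightarrow> (nat \<Rightarrow> 'a \<Rightarrow> 'b) \<Rightarrow> (nat \<Rightarrow> 'a \<Rightarrow> 'c) \<Rightarrow>
                      ((nat \<times> ('b + 'c)) \<times> (nat \<times> ('b + 'c))) set" where
  "po_rel A g h = (let R = {((n, Inl (g n a)), (n, Inr (h n a))) | n a. a \<in> cells A n}
                   in (R \<union> R\<inverse>)\<^sup>*)"

definition po_act :: "'a sset \<Rightarrow> 'b sset \<Rightarrow> 'c sset \<Rightarrow> (nat \<Rightarrow> 'a \<Rightarrow> 'b) \<Rightarrow> (nat \<Rightarrow> 'a \<Rightarrow> 'c) \<Rightarrow>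
                      nat \<Rightarrow> nat \<Rightarrow> (nat \<Rightarrow> nat) \<Rightarrow> ('b, 'c) po_elt \<Rightarrow> ('b, 'c) po_elt" where
  "po_act A B C g h m' m \<phi> x = (case (SOME y. y \<in> x) of
       (_, Inl b) \<Rightarrow> po_rel A g h `` {(m', Inl (act B m' m \<phi> b))}
     | (_, Inr c) \<Rightarrow> po_rel A g h `` {(m', Inr (act C m' m \<phi> c))})"

definition pushout :: "'a sset \<Rightarrow> 'b sset \<Rightarrow> 'c sset \<Rightarrow> (nat \<Rightarrow> 'a \<Rightarrow> 'b) \<Rightarrow> (nat \<Rightarrow> 'a \<Rightarrow> 'c) \<Rightarrow>
                       ('b, 'c) po_elt sset" where
  "pushout A B C g h = \<lparr>cells = (\<lambda>m. po_pre B C m // po_rel A g h), act = po_act A B C g h\<rparr>"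

definition po_map :: "(nat \<Rightarrow> 'b \<Rightarrow> 'd) \<Rightarrow> (nat \<Rightarrow> 'c \<Rightarrow> 'd) \<Rightarrow> nat \<Rightarrow> ('b, 'c) po_elt \<Rightarrow> 'd" where
  "po_map k1 k2 n x = (case (SOME y. y \<in> x) of (_, Inl b) \<Rightarrow> k1 n b | (_, Inr c) \<Rightarrow> k2 n c)"

definition cone_hat :: "'a sset \<Rightarrow> 'b sset \<Rightarrow> (nat \<Rightarrow> 'a \<Rightarrow> 'b) \<Rightarrow>
                        nat \<Rightarrow> ('b, 'a cone_elt) po_elt \<Rightarrow> 'b cone_elt" where
  "cone_hat A B f = po_map (cone_incl B) (cone_map B f)"

end

theory Submission
  imports Defs
begin


definition Cop :: "nat \<Rightarrow> (nat \<Rightarrow> nat) \<Rightarrow> (nat \<Rightarrow> nat)" where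
  "Cop m \<theta> = (\<lambda>i. if i = 0 then 0 else if i \<le> Suc m then Suc (\<theta> (i - 1)) else 0)"

definition d0 :: "nat \<Rightarrow> nat \<Rightarrow> nat" where
  "d0 n = (\<lambda>i. if i \<le> n then Suc i else 0)"

definition z0 :: "nat \<Rightarrow> nat" where
  "z0 = (\<lambda>_. 0)"

lemma simp_opsI:
  assumes "\<And>i j. i \<le> j \<Longrightarrow> j \<le> m \<Longrightarrow> \<theta> i \<le> \<theta> j" "\<And>i. i \<le> m \<Longrightarrow> \<theta> i \<le> n" "\<And>i. i > m \<Longrightarrow> \<theta> i = 0"
  shows "\<theta> \<in> simp_ops m n"
  using assms unfolding simp_ops_def by auto

lemma simp_opsD:
  assumes "\<theta> \<in> simp_ops m n"
  shows "\<And>i j. i \<le> j \<Longrightarrow> j \<le> m \<Longrightarrow> \<theta> i \<le> \<theta> j" "\<And>i. i \<le> m \<Longrightarrow> \<theta> i \<le> n" "\<And>i. i > m \<Longrightarrow> \<theta> i = 0"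
  using assms unfolding simp_ops_def by auto

lemma simp_ops_eqI:
  assumes "\<theta> \<in> simp_ops m n" "\<phi> \<in> simp_ops m n'" "\<And>i. i \<le> m \<Longrightarrow> \<theta> i = \<phi> i"
  shows "\<theta> = \<phi>"
proof
  fix i show "\<theta> i = \<phi> i"
    using assms simp_opsD(3)[OF assms(1)] simp_opsD(3)[OF assms(2)] by (cases "i \<le> m") auto
qed

lemma cmp_closed:
  assumes "\<sigma> \<in> simp_ops m k" "\<phi> \<in> simp_ops l m"
  shows "cmp l \<sigma> \<phi> \<in> simp_ops l k"
  using assms unfolding simp_ops_def cmp_def by auto

lemma cmp_assoc:
  assumes "\<phi> \<in> simp_ops l m"
  shows "cmp l (cmp m \<sigma> \<theta>) \<phi> = cmp l \<sigma> (cmp l \<theta> \<phi>)"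
  using assms unfolding simp_ops_def cmp_def by (auto intro!: ext)

lemma idop_in: "idop n \<in> simp_ops n n"
  unfolding simp_ops_def idop_def by auto

lemma cmp_id_right: "\<sigma> \<in> simp_ops m k \<Longrightarrow> cmp m \<sigma> (idop m) = \<sigma>"
  unfolding simp_ops_def cmp_def idop_def by (auto intro!: ext)

lemma cmp_id_left: "\<sigma> \<in> simp_ops m k \<Longrightarrow> cmp m (idop k) \<sigma> = \<sigma>"
  unfolding simp_ops_def cmp_def idop_def by (auto intro!: ext)

lemma Cop_in: "\<theta> \<in> simp_ops m n \<Longrightarrow> Cop m \<theta> \<in> simp_ops (Suc m) (Suc n)"
  unfolding simp_ops_def Cop_def by auto

lemma Cop_cone_op: "\<theta> \<in> simp_ops m n \<Longrightarrow> cone_op (Suc m) (Suc n) (Cop m \<theta>)"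
  unfolding cone_op_def using Cop_in by (auto simp: Cop_def)

lemma Cop_cmp:
  assumes "\<phi> \<in> simp_ops l m"
  shows "cmp (Suc l) (Cop m \<theta>) (Cop l \<phi>) = Cop l (cmp l \<theta> \<phi>)"
  using assms unfolding simp_ops_def cmp_def Cop_def by (auto intro!: ext)

lemma Cop_d0:
  assumes "\<theta> \<in> simp_ops m n"
  shows "cmp m (Cop m \<theta>) (d0 m) = cmp m (d0 n) \<theta>"
  using assms unfolding simp_ops_def cmp_def Cop_def d0_def by (auto intro!: ext)

lemma Cop_z0: "cmp 0 (Cop m \<theta>) z0 = z0"
  unfolding cmp_def Cop_def z0_def by (auto intro!: ext)

lemma Cop_id: "Cop n (idop n) = idop (Suc n)"
  unfolding Cop_def idop_def by (auto intro!: ext)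

lemma uncone_Cop: "\<theta> \<in> simp_ops m n \<Longrightarrow> uncone (Suc m) (Cop m \<theta>) = \<theta>"
  unfolding uncone_def Cop_def simp_ops_def by (auto intro!: ext)

lemma uncone_in:
  assumes "cone_op p q g" "1 \<le> p"
  shows "uncone p g \<in> simp_ops (p - 1) (q - 1)"
  using assms unfolding cone_op_def simp_ops_def uncone_def
  apply (simp add: cone_op_def simp_ops_def uncone_def)
  apply (intro conjI allI impI)
   apply (simp add: diff_le_mono)
  apply (simp add: diff_le_mono)
  done

lemma Cop_uncone:
  assumes "cone_op p q g" "1 \<le> p"
  shows "Cop (p - 1) (uncone p g) = g"
proof
  fix i
  show "Cop (p - 1) (uncone p g) i = g i"
    using assms unfolding cone_op_def simp_ops_def uncone_def Cop_def
    by (cases "i = 0"; cases "i \<le> p"; simp; metis Suc_pred One_nat_def le_simps(3) not_less_eq_eq)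
qed

lemma z0_in: "z0 \<in> simp_ops 0 n"
  unfolding z0_def simp_ops_def by auto

lemma z0_in': "z0 \<in> simp_ops m 0"
  unfolding z0_def simp_ops_def by auto

lemma simp_ops_0: "\<sigma> \<in> simp_ops m 0 \<Longrightarrow> \<sigma> = z0"
  unfolding z0_def simp_ops_def by (auto intro!: ext) (metis not_le)

lemma d0_in: "d0 n \<in> simp_ops n (Suc n)"
  unfolding d0_def simp_ops_def by auto

lemma cmp_z0_left: "cmp m z0 \<sigma> = z0"
  unfolding cmp_def z0_def by auto

lemma z0_cone_op: "cone_op 0 q z0"
  unfolding cone_op_def using z0_in by (auto simp: z0_def)



lemma rtr_inv:
  assumes PG: "\<And>a b. (a,b) \<in> G \<Longrightarrow> P a = P b"
    and FG: "\<And>a b. (a,b) \<in> G \<Longrightarrow> P a \<Longrightarrow> F a = F b"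
    and xy: "(x,y) \<in> (G \<union> G\<inverse>)\<^sup>*" and Px: "P x"
  shows "P y \<and> F y = F x"
  using xy
proof induction
  case base
  then show ?case using Px by simp
next
  case (step y z)
  then show ?case using PG FG by (metis Un_iff converse_iff)
qed

lemma rtr_sym: "(x,y) \<in> (G \<union> G\<inverse>)\<^sup>* \<Longrightarrow> (y,x) \<in> (G \<union> G\<inverse>)\<^sup>*"
proof -
  assume "(x,y) \<in> (G \<union> G\<inverse>)\<^sup>*"
  then have "(y,x) \<in> ((G \<union> G\<inverse>)\<inverse>)\<^sup>*" by (simp add: rtrancl_converse)
  moreover have "(G \<union> G\<inverse>)\<inverse> = G \<union> G\<inverse>" by auto
  ultimately show ?thesis by simp
qed

lemma rtr_cls_eq:
  assumes "(x,y) \<in> (G \<union> G\<inverse>)\<^sup>*"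
  shows "(G \<union> G\<inverse>)\<^sup>* `` {x} = (G \<union> G\<inverse>)\<^sup>* `` {y}"
proof -
  have "(y,x) \<in> (G \<union> G\<inverse>)\<^sup>*" using rtr_sym[OF assms] .
  then show ?thesis using assms
    by (auto intro: rtrancl_trans)
qed

lemma rtr_gen_eq:
  assumes "(x,y) \<in> G"
  shows "(G \<union> G\<inverse>)\<^sup>* `` {x} = (G \<union> G\<inverse>)\<^sup>* `` {y}"
  using assms by (intro rtr_cls_eq) auto

lemma rtr_some:
  "(SOME z. z \<in> (G \<union> G\<inverse>)\<^sup>* `` {x}) \<in> (G \<union> G\<inverse>)\<^sup>* `` {x}"
  by (rule someI[of _ x]) simp

lemma rtr_some_inv:
  assumes PG: "\<And>a b. (a,b) \<in> G \<Longrightarrow> P a = P b"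
    and FG: "\<And>a b. (a,b) \<in> G \<Longrightarrow> P a \<Longrightarrow> F a = F b"
    and Px: "P x"
  shows "P (SOME z. z \<in> (G \<union> G\<inverse>)\<^sup>* `` {x}) \<and> F (SOME z. z \<in> (G \<union> G\<inverse>)\<^sup>* `` {x}) = F x"
proof -
  have "(x, SOME z. z \<in> (G \<union> G\<inverse>)\<^sup>* `` {x}) \<in> (G \<union> G\<inverse>)\<^sup>*"
    using rtr_some[of G x] by simp
  from rtr_inv[where P=P and F=F, OF PG FG this Px] show ?thesis .
qed

section \<open>Cone\<close>

definition cls :: "'a sset \<Rightarrow> 'a cone_rep \<Rightarrow> 'a cone_elt" where
  "cls A y = cone_rel A `` {y}"

definition ptc :: "'a sset \<Rightarrow> 'a cone_elt" where
  "ptc A = cls A (0, 0, None, z0)"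

definition ctop :: "'a sset \<Rightarrow> nat \<Rightarrow> 'a \<Rightarrow> 'a cone_elt" where
  "ctop A n a = cls A (Suc n, Suc n, Some a, idop (Suc n))"

lemma cone_pre_iff:
  "(m', k, ao, \<sigma>) \<in> cone_pre A m \<longleftrightarrow> m' = m \<and> \<sigma> \<in> simp_ops m k \<and>
       (if k = 0 then ao = None else (\<exists>a. ao = Some a \<and> a \<in> cells A (k - 1)))"
  unfolding cone_pre_def by auto

lemma is_ssetD:
  assumes "is_sset X"
  shows "\<And>m n \<theta> x. \<theta> \<in> simp_ops m n \<Longrightarrow> x \<in> cells X n \<Longrightarrow> act X m n \<theta> x \<in> cells X m"
    "\<And>n x. x \<in> cells X n \<Longrightarrow> act X n n (idop n) x = x"
    "\<And>l m n \<phi> \<theta> x. \<phi> \<in> simp_ops l m \<Longrightarrow> \<theta> \<in> simp_ops m n \<Longrightarrow> x \<in> cells X n \<Longrightarrow>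
        act X l m \<phi> (act X m n \<theta> x) = act X l n (cmp l \<theta> \<phi>) x"
  using assms unfolding is_sset_def by blast+

lemma smapD:
  assumes "smap X Y f"
  shows "\<And>n x. x \<in> cells X n \<Longrightarrow> f n x \<in> cells Y n"
    "\<And>m n \<theta> x. \<theta> \<in> simp_ops m n \<Longrightarrow> x \<in> cells X n \<Longrightarrow>
        f m (act X m n \<theta> x) = act Y m n \<theta> (f n x)"
  using assms unfolding smap_def by blast+

lemma cone_gen_E:
  assumes "(x, y) \<in> cone_gen A"
  obtains m p q g \<sigma> a where "x = (m, q, Some a, cmp m g \<sigma>)"
    "y = (m, p, (if p = 0 then None else Some (act A (p - 1) (q - 1) (uncone p g) a)), \<sigma>)"
    "cone_op p q g" "\<sigma> \<in> simp_ops m p" "1 \<le> q" "a \<in> cells A (q - 1)"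
  using assms unfolding cone_gen_def by blast

lemma cone_gen_I:
  assumes "cone_op p q g" "\<sigma> \<in> simp_ops m p" "1 \<le> q" "a \<in> cells A (q - 1)"
  shows "((m, q, Some a, cmp m g \<sigma>),
          (m, p, (if p = 0 then None else Some (act A (p - 1) (q - 1) (uncone p g) a)), \<sigma>)) \<in> cone_gen A"
  using assms unfolding cone_gen_def by blast

lemma cone_gen_pre:
  assumes "is_sset A" "(x, y) \<in> cone_gen A"
  shows "x \<in> cone_pre A (fst x) \<and> y \<in> cone_pre A (fst x) \<and> fst y = fst x"
proof -
  obtain m p q g \<sigma> a where e: "x = (m, q, Some a, cmp m g \<sigma>)"
    "y = (m, p, (if p = 0 then None else Some (act A (p - 1) (q - 1) (uncone p g) a)), \<sigma>)"
    and c: "cone_op p q g" "\<sigma> \<in> simp_ops m p" "1 \<le> q" "a \<in> cells A (q - 1)"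
    using cone_gen_E[OF assms(2)] by metis
  have g: "g \<in> simp_ops p q" using c unfolding cone_op_def by simp
  have "cmp m g \<sigma> \<in> simp_ops m q" using cmp_closed[OF g c(2)] .
  moreover have "p \<noteq> 0 \<Longrightarrow> act A (p - 1) (q - 1) (uncone p g) a \<in> cells A (p - 1)"
    using is_ssetD(1)[OF assms(1) uncone_in[OF c(1)] c(4)] by simp
  ultimately show ?thesis using e c by (auto simp: cone_pre_iff)
qed

lemma cone_rel_def': "cone_rel A = (cone_gen A \<union> (cone_gen A)\<inverse>)\<^sup>*"
  by (simp add: cone_rel_def)

lemma cone_gen_P:
  assumes "is_sset A" "(x, y) \<in> cone_gen A"
  shows "(x \<in> cone_pre A m) = (y \<in> cone_pre A m)"
  using cone_gen_pre[OF assms] unfolding cone_pre_def by auto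

lemma cone_some_inv:
  assumes "is_sset A"
    and FG: "\<And>m p q g \<sigma> a. m = n \<Longrightarrow> cone_op p q g \<Longrightarrow> \<sigma> \<in> simp_ops m p \<Longrightarrow> 1 \<le> q \<Longrightarrow> a \<in> cells A (q - 1) \<Longrightarrow>
       F (m, q, Some a, cmp m g \<sigma>) =
       F (m, p, (if p = 0 then None else Some (act A (p - 1) (q - 1) (uncone p g) a)), \<sigma>)"
    and Px: "x \<in> cone_pre A n"
  shows "(SOME z. z \<in> cls A x) \<in> cone_pre A n \<and> F (SOME z. z \<in> cls A x) = F x"
  unfolding cls_def cone_rel_def
proof (rule rtr_some_inv[where P = "\<lambda>y. y \<in> cone_pre A n"])
  fix a b assume "(a, b) \<in> cone_gen A"
  then show "(a \<in> cone_pre A n) = (b \<in> cone_pre A n)" using cone_gen_P[OF assms(1)] by blast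
next
  fix a b assume ab: "(a, b) \<in> cone_gen A" and "a \<in> cone_pre A n"
  then have "fst a = n" unfolding cone_pre_def by auto
  then show "F a = F b" using ab FG by (auto elim!: cone_gen_E)
qed (rule Px)

lemma cls_gen:
  assumes "cone_op p q g" "\<sigma> \<in> simp_ops m p" "1 \<le> q" "a \<in> cells A (q - 1)"
  shows "cls A (m, q, Some a, cmp m g \<sigma>) =
         cls A (m, p, (if p = 0 then None else Some (act A (p - 1) (q - 1) (uncone p g) a)), \<sigma>)"
  unfolding cls_def cone_rel_def by (rule rtr_gen_eq[OF cone_gen_I[OF assms]])

lemma cls_gen_Cop:
  assumes "\<theta> \<in> simp_ops m' n" "\<sigma> \<in> simp_ops m (Suc m')" "a \<in> cells A n"
  shows "cls A (m, Suc n, Some a, cmp m (Cop m' \<theta>) \<sigma>) = cls A (m, Suc m', Some (act A m' n \<theta> a), \<sigma>)"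
  using cls_gen[OF Cop_cone_op[OF assms(1)] assms(2) _, of a A] assms by (simp add: uncone_Cop)

lemma cls_gen_z0:
  assumes "\<sigma> \<in> simp_ops m 0" "1 \<le> q" "a \<in> cells A (q - 1)"
  shows "cls A (m, q, Some a, z0) = cls A (m, 0, None, \<sigma>)"
  using cls_gen[OF z0_cone_op assms(1,2,3)] by (simp add: cmp_z0_left)

lemma cone_act_cls:
  assumes A: "is_sset A" and y: "(n, k, ao, \<sigma>) \<in> cone_pre A n" and \<phi>: "\<phi> \<in> simp_ops m n"
  shows "cone_act A m n \<phi> (cls A (n, k, ao, \<sigma>)) = cls A (m, k, ao, cmp m \<sigma> \<phi>)"
proof -
  let ?F = "\<lambda>r. case r of (_, k, ao, \<sigma>) \<Rightarrow> cone_rel A `` {(m, k, ao, cmp m \<sigma> \<phi>)}"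
  have "?F (SOME z. z \<in> cls A (n, k, ao, \<sigma>)) = ?F (n, k, ao, \<sigma>)"
  proof (rule conjunct2[OF cone_some_inv[OF A _ y]])
    fix m0 p q g \<sigma>' a assume h: "m0 = n" "cone_op p q g" "\<sigma>' \<in> simp_ops m0 p" "1 \<le> q" "a \<in> cells A (q - 1)"
    have "cmp m (cmp m0 g \<sigma>') \<phi> = cmp m g (cmp m \<sigma>' \<phi>)" using cmp_assoc \<phi> h(1) by blast
    moreover have "cmp m \<sigma>' \<phi> \<in> simp_ops m p" using cmp_closed h \<phi> by blast
    ultimately show "?F (m0, q, Some a, cmp m0 g \<sigma>') =
       ?F (m0, p, (if p = 0 then None else Some (act A (p - 1) (q - 1) (uncone p g) a)), \<sigma>')"
      using cls_gen[OF h(2) _ h(4,5)] unfolding cls_def by simp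
  qed
  then show ?thesis unfolding cone_act_def cls_def by simp
qed

lemma cone_cells: "cells (cone A) n = cone_pre A n // cone_rel A"
  by (simp add: cone_def)

lemma cone_act_eq: "act (cone A) = cone_act A"
  by (simp add: cone_def)

lemma cone_cellsE:
  assumes "x \<in> cells (cone A) n"
  obtains k ao \<sigma> where "(n, k, ao, \<sigma>) \<in> cone_pre A n" "x = cls A (n, k, ao, \<sigma>)"
proof -
  obtain y where "y \<in> cone_pre A n" "x = cone_rel A `` {y}"
    using assms unfolding cone_cells by (auto elim: quotientE)
  moreover then obtain k ao \<sigma> where "y = (n, k, ao, \<sigma>)" unfolding cone_pre_def by auto
  ultimately show ?thesis using that unfolding cls_def by blast
qed

lemma cone_cellsI: "y \<in> cone_pre A n \<Longrightarrow> cls A y \<in> cells (cone A) n"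
  unfolding cone_cells cls_def by (rule quotientI)

lemma is_sset_cone:
  assumes A: "is_sset A"
  shows "is_sset (cone A)"
  unfolding is_sset_def cone_act_eq
proof (intro conjI allI impI)
  fix m n \<theta> x assume \<theta>: "\<theta> \<in> simp_ops m n" and x: "x \<in> cells (cone A) n"
  from x obtain k ao \<sigma> where y: "(n, k, ao, \<sigma>) \<in> cone_pre A n" "x = cls A (n, k, ao, \<sigma>)"
    by (rule cone_cellsE)
  show "cone_act A m n \<theta> x \<in> cells (cone A) m"
    using y \<theta> by (auto simp: cone_act_cls[OF A] cone_pre_iff intro!: cone_cellsI cmp_closed)
next
  fix n x assume x: "x \<in> cells (cone A) n"
  from x obtain k ao \<sigma> where y: "(n, k, ao, \<sigma>) \<in> cone_pre A n" "x = cls A (n, k, ao, \<sigma>)"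
    by (rule cone_cellsE)
  show "cone_act A n n (idop n) x = x"
    using y by (auto simp: cone_act_cls[OF A] cone_pre_iff idop_in cmp_id_right)
next
  fix l m n \<phi> \<theta> x assume \<phi>: "\<phi> \<in> simp_ops l m" and \<theta>: "\<theta> \<in> simp_ops m n" and x: "x \<in> cells (cone A) n"
  from x obtain k ao \<sigma> where y: "(n, k, ao, \<sigma>) \<in> cone_pre A n" "x = cls A (n, k, ao, \<sigma>)"
    by (rule cone_cellsE)
  have y2: "(m, k, ao, cmp m \<sigma> \<theta>) \<in> cone_pre A m"
    using y \<theta> by (auto simp: cone_pre_iff intro: cmp_closed)
  show "cone_act A l m \<phi> (cone_act A m n \<theta> x) = cone_act A l n (cmp l \<theta> \<phi>) x"
    using y \<theta> \<phi> y2 cmp_closed[OF \<theta> \<phi>]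
    by (simp add: cone_act_cls[OF A] cmp_assoc)
qed


lemma cone_incl_eq: "cone_incl A n a = cls A (n, Suc n, Some a, d0 n)"
  unfolding cone_incl_def cls_def d0_def by simp

lemma ctop_in: "a \<in> cells A n \<Longrightarrow> ctop A n a \<in> cells (cone A) (Suc n)"
  unfolding ctop_def by (rule cone_cellsI) (simp add: cone_pre_iff idop_in)

lemma ptc_in: "ptc A \<in> cells (cone A) 0"
  unfolding ptc_def by (rule cone_cellsI) (simp add: cone_pre_iff z0_in)

lemma cone_incl_in: "a \<in> cells A n \<Longrightarrow> cone_incl A n a \<in> cells (cone A) n"
  unfolding cone_incl_eq by (rule cone_cellsI) (simp add: cone_pre_iff d0_in)

lemma ctop_act_any:
  assumes A: "is_sset A" and a: "a \<in> cells A n" and \<sigma>: "\<sigma> \<in> simp_ops m (Suc n)"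
  shows "cone_act A m (Suc n) \<sigma> (ctop A n a) = cls A (m, Suc n, Some a, \<sigma>)"
  unfolding ctop_def using a \<sigma>
  by (simp add: cone_act_cls[OF A] cone_pre_iff idop_in cmp_id_left)

lemma ptc_act:
  assumes A: "is_sset A" and \<sigma>: "\<sigma> \<in> simp_ops m 0"
  shows "cone_act A m 0 \<sigma> (ptc A) = cls A (m, 0, None, \<sigma>)"
  unfolding ptc_def using \<sigma>
  using simp_ops_0[OF \<sigma>] by (simp add: cone_act_cls[OF A] cone_pre_iff z0_in cmp_z0_left)

lemma ctop_act:
  assumes A: "is_sset A" and a: "a \<in> cells A n" and \<theta>: "\<theta> \<in> simp_ops m n"
  shows "cone_act A (Suc m) (Suc n) (Cop m \<theta>) (ctop A n a) = ctop A m (act A m n \<theta> a)"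
proof -
  have "cone_act A (Suc m) (Suc n) (Cop m \<theta>) (ctop A n a) = cls A (Suc m, Suc n, Some a, Cop m \<theta>)"
    using ctop_act_any[OF A a Cop_in[OF \<theta>]] .
  also have "\<dots> = cls A (Suc m, Suc n, Some a, cmp (Suc m) (Cop m \<theta>) (idop (Suc m)))"
    using cmp_id_right[OF Cop_in[OF \<theta>]] by simp
  also have "\<dots> = ctop A m (act A m n \<theta> a)"
    unfolding ctop_def by (rule cls_gen_Cop[OF \<theta> idop_in a])
  finally show ?thesis .
qed

lemma ctop_d0:
  assumes A: "is_sset A" and a: "a \<in> cells A n"
  shows "cone_act A n (Suc n) (d0 n) (ctop A n a) = cone_incl A n a"
  using ctop_act_any[OF A a d0_in] by (simp add: cone_incl_eq)

lemma ctop_z0: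
  assumes A: "is_sset A" and a: "a \<in> cells A n"
  shows "cone_act A 0 (Suc n) z0 (ctop A n a) = ptc A"
  using ctop_act_any[OF A a z0_in] cls_gen_z0[OF z0_in', of "Suc n" a A] a
  unfolding ptc_def by simp

lemma smap_cone_incl:
  assumes A: "is_sset A"
  shows "smap A (cone A) (cone_incl A)"
  unfolding smap_def cone_act_eq
proof (intro conjI allI impI)
  fix n a assume "a \<in> cells A n" then show "cone_incl A n a \<in> cells (cone A) n" by (rule cone_incl_in)
next
  fix m n \<theta> a assume \<theta>: "\<theta> \<in> simp_ops m n" and a: "a \<in> cells A n"
  have "cone_act A m n \<theta> (cone_incl A n a) = cls A (m, Suc n, Some a, cmp m (d0 n) \<theta>)"
    unfolding cone_incl_eq using a by (simp add: cone_act_cls[OF A] cone_pre_iff d0_in \<theta>)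
  also have "\<dots> = cls A (m, Suc n, Some a, cmp m (Cop m \<theta>) (d0 m))"
    using Cop_d0[OF \<theta>] by simp
  also have "\<dots> = cone_incl A m (act A m n \<theta> a)"
    unfolding cone_incl_eq by (rule cls_gen_Cop[OF \<theta> d0_in a])
  finally show "cone_incl A m (act A m n \<theta> a) = cone_act A m n \<theta> (cone_incl A n a)" by simp
qed

lemma cone_map_cls:
  assumes A: "is_sset A" and B: "is_sset B" and f: "smap A B f"
    and y: "(n, k, ao, \<sigma>) \<in> cone_pre A n"
  shows "cone_map B f n (cls A (n, k, ao, \<sigma>)) = cls B (n, k, map_option (f (k - 1)) ao, \<sigma>)"
proof -
  let ?F = "\<lambda>r. case r of (m', k, ao, \<sigma>) \<Rightarrow> cone_rel B `` {(m', k, map_option (f (k - 1)) ao, \<sigma>)}"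
  have "?F (SOME z. z \<in> cls A (n, k, ao, \<sigma>)) = ?F (n, k, ao, \<sigma>)"
  proof (rule conjunct2[OF cone_some_inv[OF A _ y]])
    fix m0 p q g \<sigma>' a assume h: "m0 = n" "cone_op p q g" "\<sigma>' \<in> simp_ops m0 p" "1 \<le> q" "a \<in> cells A (q - 1)"
    have fa: "f (q - 1) a \<in> cells B (q - 1)" using smapD(1)[OF f h(5)] .
    have "p \<noteq> 0 \<Longrightarrow> f (p - 1) (act A (p - 1) (q - 1) (uncone p g) a) = act B (p - 1) (q - 1) (uncone p g) (f (q - 1) a)"
      using smapD(2)[OF f uncone_in[OF h(2)] h(5)] by simp
    then show "?F (m0, q, Some a, cmp m0 g \<sigma>') =
       ?F (m0, p, (if p = 0 then None else Some (act A (p - 1) (q - 1) (uncone p g) a)), \<sigma>')"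
      using cls_gen[OF h(2) h(3) h(4) fa] unfolding cls_def by simp
  qed
  then show ?thesis unfolding cone_map_def cls_def by simp
qed

lemma cone_map_in:
  assumes A: "is_sset A" and B: "is_sset B" and f: "smap A B f" and x: "x \<in> cells (cone A) n"
  shows "cone_map B f n x \<in> cells (cone B) n"
proof -
  from x obtain k ao \<sigma> where y: "(n, k, ao, \<sigma>) \<in> cone_pre A n" "x = cls A (n, k, ao, \<sigma>)"
    by (rule cone_cellsE)
  show ?thesis using y smapD(1)[OF f] by (auto simp: cone_map_cls[OF A B f] cone_pre_iff intro!: cone_cellsI split: if_splits)
qed

lemma smap_cone_map:
  assumes A: "is_sset A" and B: "is_sset B" and f: "smap A B f"
  shows "smap (cone A) (cone B) (cone_map B f)"
  unfolding smap_def
proof (intro conjI allI impI)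
  fix n x assume "x \<in> cells (cone A) n" then show "cone_map B f n x \<in> cells (cone B) n"
    by (rule cone_map_in[OF A B f])
next
  fix m n \<theta> x assume \<theta>: "\<theta> \<in> simp_ops m n" and x: "x \<in> cells (cone A) n"
  from x obtain k ao \<sigma> where y: "(n, k, ao, \<sigma>) \<in> cone_pre A n" "x = cls A (n, k, ao, \<sigma>)"
    by (rule cone_cellsE)
  have y2: "(m, k, ao, cmp m \<sigma> \<theta>) \<in> cone_pre A m"
    using y \<theta> by (auto simp: cone_pre_iff intro: cmp_closed)
  have y3: "(n, k, map_option (f (k - 1)) ao, \<sigma>) \<in> cone_pre B n"
    using y smapD(1)[OF f] by (auto simp: cone_pre_iff split: if_splits)
  show "cone_map B f m (act (cone A) m n \<theta> x) = act (cone B) m n \<theta> (cone_map B f n x)"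
    unfolding cone_act_eq using y y2 y3 \<theta>
    by (simp add: cone_act_cls[OF A] cone_act_cls[OF B] cone_map_cls[OF A B f])
qed

lemma cone_map_ctop:
  assumes A: "is_sset A" and B: "is_sset B" and f: "smap A B f" and a: "a \<in> cells A n"
  shows "cone_map B f (Suc n) (ctop A n a) = ctop B n (f n a)"
  unfolding ctop_def using a by (simp add: cone_map_cls[OF A B f] cone_pre_iff idop_in)

lemma cone_map_ptc:
  assumes A: "is_sset A" and B: "is_sset B" and f: "smap A B f"
  shows "cone_map B f 0 (ptc A) = ptc B"
  unfolding ptc_def by (simp add: cone_map_cls[OF A B f] cone_pre_iff z0_in)

lemma cone_map_incl:
  assumes A: "is_sset A" and B: "is_sset B" and f: "smap A B f" and a: "a \<in> cells A n"
  shows "cone_map B f n (cone_incl A n a) = cone_incl B n (f n a)"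
  unfolding cone_incl_eq using a by (simp add: cone_map_cls[OF A B f] cone_pre_iff d0_in)



definition po_gen :: "'a sset \<Rightarrow> (nat \<Rightarrow> 'a \<Rightarrow> 'b) \<Rightarrow> (nat \<Rightarrow> 'a \<Rightarrow> 'c) \<Rightarrow>
                      ((nat \<times> ('b + 'c)) \<times> (nat \<times> ('b + 'c))) set" where
  "po_gen A g h = {((n, Inl (g n a)), (n, Inr (h n a))) | n a. a \<in> cells A n}"

lemma po_rel_eq: "po_rel A g h = (po_gen A g h \<union> (po_gen A g h)\<inverse>)\<^sup>*"
  unfolding po_rel_def po_gen_def Let_def by simp

definition pcls :: "'a sset \<Rightarrow> (nat \<Rightarrow> 'a \<Rightarrow> 'b) \<Rightarrow> (nat \<Rightarrow> 'a \<Rightarrow> 'c) \<Rightarrow> nat \<times> ('b + 'c) \<Rightarrow> ('b, 'c) po_elt" where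
  "pcls A g h y = po_rel A g h `` {y}"

definition po_actr :: "'b sset \<Rightarrow> 'c sset \<Rightarrow> nat \<Rightarrow> nat \<Rightarrow> (nat \<Rightarrow> nat) \<Rightarrow> nat \<times> ('b + 'c) \<Rightarrow> nat \<times> ('b + 'c)" where
  "po_actr B C m n \<theta> y = (case snd y of Inl b \<Rightarrow> (m, Inl (act B m n \<theta> b)) | Inr c \<Rightarrow> (m, Inr (act C m n \<theta> c)))"

lemma po_pre_Inl: "(n', Inl b) \<in> po_pre B C n \<longleftrightarrow> n' = n \<and> b \<in> cells B n"
  unfolding po_pre_def by auto

lemma po_pre_Inr: "(n', Inr c) \<in> po_pre B C n \<longleftrightarrow> n' = n \<and> c \<in> cells C n"
  unfolding po_pre_def by auto

lemma po_pre_cases: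
  assumes "y \<in> po_pre B C n"
  obtains b where "y = (n, Inl b)" "b \<in> cells B n" | c where "y = (n, Inr c)" "c \<in> cells C n"
  using assms unfolding po_pre_def by auto

locale pctx =
  fixes A :: "'a sset" and B :: "'b sset" and C :: "'c sset" and g h
  assumes A: "is_sset A" and B: "is_sset B" and C: "is_sset C"
    and g: "smap A B g" and h: "smap A C h"
begin

lemma po_gen_P:
  assumes "(x, y) \<in> po_gen A g h"
  shows "(x \<in> po_pre B C n) = (y \<in> po_pre B C n)"
  using assms smapD(1)[OF g] smapD(1)[OF h] unfolding po_gen_def
  by (auto simp: po_pre_Inl po_pre_Inr)

lemma po_some_inv:
  assumes FG: "\<And>a. a \<in> cells A n \<Longrightarrow> F (n, Inl (g n a)) = F (n, Inr (h n a))"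
    and Px: "x \<in> po_pre B C n"
  shows "(SOME z. z \<in> pcls A g h x) \<in> po_pre B C n \<and> F (SOME z. z \<in> pcls A g h x) = F x"
  unfolding pcls_def po_rel_eq
proof (rule rtr_some_inv[where P = "\<lambda>y. y \<in> po_pre B C n"])
  fix a b assume "(a, b) \<in> po_gen A g h"
  then show "(a \<in> po_pre B C n) = (b \<in> po_pre B C n)" using po_gen_P by blast
next
  fix a b assume ab: "(a, b) \<in> po_gen A g h" and "a \<in> po_pre B C n"
  then show "F a = F b" using FG unfolding po_gen_def by (auto simp: po_pre_Inl)
qed (rule Px)

lemma pcls_gen: "a \<in> cells A n \<Longrightarrow> pcls A g h (n, Inl (g n a)) = pcls A g h (n, Inr (h n a))"
  unfolding pcls_def po_rel_eq by (rule rtr_gen_eq) (auto simp: po_gen_def)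

lemma po_act_cls:
  assumes y: "y \<in> po_pre B C n" and \<theta>: "\<theta> \<in> simp_ops m n"
  shows "po_act A B C g h m n \<theta> (pcls A g h y) = pcls A g h (po_actr B C m n \<theta> y)"
proof -
  let ?F = "\<lambda>y. pcls A g h (po_actr B C m n \<theta> y)"
  have "?F (SOME z. z \<in> pcls A g h y) = ?F y"
  proof (rule conjunct2[OF po_some_inv[OF _ y]])
    fix a assume a: "a \<in> cells A n"
    have "act B m n \<theta> (g n a) = g m (act A m n \<theta> a)" using smapD(2)[OF g \<theta> a] by simp
    moreover have "act C m n \<theta> (h n a) = h m (act A m n \<theta> a)" using smapD(2)[OF h \<theta> a] by simp
    ultimately show "?F (n, Inl (g n a)) = ?F (n, Inr (h n a))"
      using pcls_gen[OF is_ssetD(1)[OF A \<theta> a]] by (simp add: po_actr_def)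
  qed
  moreover have "po_act A B C g h m n \<theta> x = ?F (SOME z. z \<in> x)" for x
    unfolding po_act_def po_actr_def pcls_def by (auto split: prod.splits sum.splits)
  ultimately show ?thesis by simp
qed

lemma po_cells: "cells (pushout A B C g h) n = po_pre B C n // po_rel A g h"
  by (simp add: pushout_def)

lemma po_act_eq: "act (pushout A B C g h) = po_act A B C g h"
  by (simp add: pushout_def)

lemma po_cellsE:
  assumes "x \<in> cells (pushout A B C g h) n"
  obtains y where "y \<in> po_pre B C n" "x = pcls A g h y"
  using assms unfolding po_cells pcls_def by (auto elim: quotientE)

lemma po_cellsI: "y \<in> po_pre B C n \<Longrightarrow> pcls A g h y \<in> cells (pushout A B C g h) n"
  unfolding po_cells pcls_def by (rule quotientI)

lemma po_actr_pre:
  assumes "y \<in> po_pre B C n" "\<theta> \<in> simp_ops m n"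
  shows "po_actr B C m n \<theta> y \<in> po_pre B C m"
  using assms is_ssetD(1)[OF B] is_ssetD(1)[OF C]
  by (auto elim!: po_pre_cases simp: po_actr_def po_pre_Inl po_pre_Inr)

lemma is_sset_pushout: "is_sset (pushout A B C g h)"
  unfolding is_sset_def po_act_eq
proof (intro conjI allI impI)
  fix m n \<theta> x assume \<theta>: "\<theta> \<in> simp_ops m n" and x: "x \<in> cells (pushout A B C g h) n"
  from x obtain y where y: "y \<in> po_pre B C n" "x = pcls A g h y" by (rule po_cellsE)
  show "po_act A B C g h m n \<theta> x \<in> cells (pushout A B C g h) m"
    using y \<theta> by (simp add: po_act_cls po_cellsI po_actr_pre)
next
  fix n x assume x: "x \<in> cells (pushout A B C g h) n"
  from x obtain y where y: "y \<in> po_pre B C n" "x = pcls A g h y" by (rule po_cellsE)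
  show "po_act A B C g h n n (idop n) x = x"
    using y is_ssetD(2)[OF B] is_ssetD(2)[OF C]
    by (auto simp: po_act_cls idop_in po_actr_def elim!: po_pre_cases)
next
  fix l m n \<phi> \<theta> x assume \<phi>: "\<phi> \<in> simp_ops l m" and \<theta>: "\<theta> \<in> simp_ops m n"
    and x: "x \<in> cells (pushout A B C g h) n"
  from x obtain y where y: "y \<in> po_pre B C n" "x = pcls A g h y" by (rule po_cellsE)
  show "po_act A B C g h l m \<phi> (po_act A B C g h m n \<theta> x) = po_act A B C g h l n (cmp l \<theta> \<phi>) x"
    using y \<theta> \<phi> po_actr_pre[OF y(1) \<theta>] cmp_closed[OF \<theta> \<phi>]
      is_ssetD(3)[OF B \<phi> \<theta>] is_ssetD(3)[OF C \<phi> \<theta>]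
    by (auto simp: po_act_cls po_actr_def elim!: po_pre_cases)
qed

lemma po_map_cls:
  assumes compat: "\<And>a. a \<in> cells A n \<Longrightarrow> k1 n (g n a) = k2 n (h n a)"
    and y: "y \<in> po_pre B C n"
  shows "po_map k1 k2 n (pcls A g h y) = (case snd y of Inl b \<Rightarrow> k1 n b | Inr c \<Rightarrow> k2 n c)"
proof -
  let ?F = "\<lambda>y. (case snd y of Inl b \<Rightarrow> k1 n b | Inr c \<Rightarrow> k2 n c)"
  have "?F (SOME z. z \<in> pcls A g h y) = ?F y"
    by (rule conjunct2[OF po_some_inv[OF _ y]]) (simp add: compat)
  moreover have "po_map k1 k2 n x = ?F (SOME z. z \<in> x)" for x
    unfolding po_map_def by (auto split: prod.splits sum.splits)
  ultimately show ?thesis by simp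
qed

lemma po_map_cls':
  assumes compat: "\<And>n a. a \<in> cells A n \<Longrightarrow> k1 n (g n a) = k2 n (h n a)"
    and y: "y \<in> po_pre B C n"
  shows "po_map k1 k2 n (pcls A g h y) = (case snd y of Inl b \<Rightarrow> k1 n b | Inr c \<Rightarrow> k2 n c)"
  by (rule po_map_cls[where n=n]) (auto intro: compat y)

lemma smap_po_map:
  assumes k1: "smap B D k1" and k2: "smap C D k2"
    and compat: "\<And>n a. a \<in> cells A n \<Longrightarrow> k1 n (g n a) = k2 n (h n a)"
  shows "smap (pushout A B C g h) D (po_map k1 k2)"
  unfolding smap_def po_act_eq
proof (intro conjI allI impI)
  fix n x assume x: "x \<in> cells (pushout A B C g h) n"
  from x obtain y where y: "y \<in> po_pre B C n" "x = pcls A g h y" by (rule po_cellsE)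
  show "po_map k1 k2 n x \<in> cells D n"
    using y smapD(1)[OF k1] smapD(1)[OF k2]
    by (auto simp: po_map_cls'[where ?k1.0=k1 and ?k2.0=k2, OF compat] elim!: po_pre_cases)
next
  fix m n \<theta> x assume \<theta>: "\<theta> \<in> simp_ops m n" and x: "x \<in> cells (pushout A B C g h) n"
  from x obtain y where y: "y \<in> po_pre B C n" "x = pcls A g h y" by (rule po_cellsE)
  show "po_map k1 k2 m (po_act A B C g h m n \<theta> x) = act D m n \<theta> (po_map k1 k2 n x)"
    using y \<theta> po_actr_pre[OF y(1) \<theta>] smapD(2)[OF k1 \<theta>] smapD(2)[OF k2 \<theta>]
    by (auto simp: po_act_cls po_map_cls'[where ?k1.0=k1 and ?k2.0=k2, OF compat] po_actr_def elim!: po_pre_cases)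
qed

lemma inl_in: "b \<in> cells B n \<Longrightarrow> pcls A g h (n, Inl b) \<in> cells (pushout A B C g h) n"
  by (rule po_cellsI) (simp add: po_pre_Inl)

lemma inr_in: "c \<in> cells C n \<Longrightarrow> pcls A g h (n, Inr c) \<in> cells (pushout A B C g h) n"
  by (rule po_cellsI) (simp add: po_pre_Inr)

lemma act_inl: "b \<in> cells B n \<Longrightarrow> \<theta> \<in> simp_ops m n \<Longrightarrow>
   act (pushout A B C g h) m n \<theta> (pcls A g h (n, Inl b)) = pcls A g h (m, Inl (act B m n \<theta> b))"
  by (simp add: po_act_eq po_act_cls po_pre_Inl po_actr_def)

lemma act_inr: "c \<in> cells C n \<Longrightarrow> \<theta> \<in> simp_ops m n \<Longrightarrow>
   act (pushout A B C g h) m n \<theta> (pcls A g h (n, Inr c)) = pcls A g h (m, Inr (act C m n \<theta> c))"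
  by (simp add: po_act_eq po_act_cls po_pre_Inr po_actr_def)

end



definition Xs :: "'x sset \<Rightarrow> 'x \<Rightarrow> ('x \<times> 'w) list sset" where
  "Xs X x0 = \<lparr>cells = (\<lambda>n. {[(x, undefined)] | x. x \<in> cells X (Suc n) \<and> act X 0 (Suc n) z0 x = x0}),
              act = (\<lambda>m n \<theta> z. [(act X (Suc m) (Suc n) (Cop m \<theta>) (fst (hd z)), undefined)])\<rparr>"

definition Ys :: "'x sset \<Rightarrow> 'w sset \<Rightarrow> (nat \<Rightarrow> 'x \<Rightarrow> 'w) \<Rightarrow> 'x \<Rightarrow> ('x \<times> 'w) list sset" where
  "Ys X Y p x0 = \<lparr>cells = (\<lambda>n. {[(x, y)] | x y. x \<in> cells X n \<and> y \<in> cells Y (Suc n) \<and>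
                        act Y 0 (Suc n) z0 y = p 0 x0 \<and> act Y n (Suc n) (d0 n) y = p n x}),
              act = (\<lambda>m n \<theta> z. [(act X m n \<theta> (fst (hd z)), act Y (Suc m) (Suc n) (Cop m \<theta>) (snd (hd z)))])\<rparr>"

definition qs :: "'x sset \<Rightarrow> (nat \<Rightarrow> 'x \<Rightarrow> 'w) \<Rightarrow> nat \<Rightarrow> ('x \<times> 'w) list \<Rightarrow> ('x \<times> 'w) list" where
  "qs X p n z = [(act X n (Suc n) (d0 n) (fst (hd z)), p (Suc n) (fst (hd z)))]"

lemma Xs_cells: "z \<in> cells (Xs X x0) n \<longleftrightarrow> (\<exists>x. z = [(x, undefined)] \<and> x \<in> cells X (Suc n) \<and> act X 0 (Suc n) z0 x = x0)"
  unfolding Xs_def by auto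

lemma Ys_cells: "z \<in> cells (Ys X Y p x0) n \<longleftrightarrow> (\<exists>x y. z = [(x, y)] \<and> x \<in> cells X n \<and> y \<in> cells Y (Suc n) \<and>
                        act Y 0 (Suc n) z0 y = p 0 x0 \<and> act Y n (Suc n) (d0 n) y = p n x)"
  unfolding Ys_def by auto

lemma Xs_act: "act (Xs X x0) m n \<theta> [(x, w)] = [(act X (Suc m) (Suc n) (Cop m \<theta>) x, undefined)]"
  unfolding Xs_def by simp

lemma Ys_act: "act (Ys X Y p x0) m n \<theta> [(x, y)] = [(act X m n \<theta> x, act Y (Suc m) (Suc n) (Cop m \<theta>) y)]"
  unfolding Ys_def by simp

lemma qs_eq: "qs X p n [(x, w)] = [(act X n (Suc n) (d0 n) x, p (Suc n) x)]"
  unfolding qs_def by simp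

lemma z0_idop: "z0 = idop 0"
  unfolding z0_def idop_def by auto

lemma cmp_z0_z0: "cmp m z0 z0 = z0"
  unfolding cmp_def z0_def by auto

lemma is_sset_Xs:
  assumes X: "is_sset X"
  shows "is_sset (Xs X x0)"
  unfolding is_sset_def
proof (intro conjI allI impI)
  fix m n \<theta> z assume \<theta>: "\<theta> \<in> simp_ops m n" and z: "z \<in> cells (Xs X x0) n"
  then obtain x where x: "z = [(x, undefined)]" "x \<in> cells X (Suc n)" "act X 0 (Suc n) z0 x = x0"
    unfolding Xs_cells by blast
  have "act X 0 (Suc m) z0 (act X (Suc m) (Suc n) (Cop m \<theta>) x) = act X 0 (Suc n) z0 x"
    using is_ssetD(3)[OF X z0_in Cop_in[OF \<theta>] x(2)] by (simp add: Cop_z0)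
  then show "act (Xs X x0) m n \<theta> z \<in> cells (Xs X x0) m"
    using x is_ssetD(1)[OF X Cop_in[OF \<theta>] x(2)] by (simp add: Xs_act Xs_cells)
next
  fix n z assume z: "z \<in> cells (Xs X x0) n"
  then obtain x where x: "z = [(x, undefined)]" "x \<in> cells X (Suc n)" "act X 0 (Suc n) z0 x = x0"
    unfolding Xs_cells by blast
  show "act (Xs X x0) n n (idop n) z = z"
    using x is_ssetD(2)[OF X x(2)] by (simp add: Xs_act Cop_id)
next
  fix l m n \<phi> \<theta> z assume \<phi>: "\<phi> \<in> simp_ops l m" and \<theta>: "\<theta> \<in> simp_ops m n" and z: "z \<in> cells (Xs X x0) n"
  then obtain x where x: "z = [(x, undefined)]" "x \<in> cells X (Suc n)" "act X 0 (Suc n) z0 x = x0"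
    unfolding Xs_cells by blast
  show "act (Xs X x0) l m \<phi> (act (Xs X x0) m n \<theta> z) = act (Xs X x0) l n (cmp l \<theta> \<phi>) z"
    using x is_ssetD(3)[OF X Cop_in[OF \<phi>] Cop_in[OF \<theta>] x(2)] by (simp add: Xs_act Cop_cmp[OF \<phi>])
qed

lemma is_sset_Ys:
  assumes X: "is_sset X" and Y: "is_sset Y" and p: "smap X Y p"
  shows "is_sset (Ys X Y p x0)"
  unfolding is_sset_def
proof (intro conjI allI impI)
  fix m n \<theta> z assume \<theta>: "\<theta> \<in> simp_ops m n" and z: "z \<in> cells (Ys X Y p x0) n"
  then obtain x y where x: "z = [(x, y)]" "x \<in> cells X n" "y \<in> cells Y (Suc n)"
     "act Y 0 (Suc n) z0 y = p 0 x0" "act Y n (Suc n) (d0 n) y = p n x"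
    unfolding Ys_cells by blast
  have "act Y 0 (Suc m) z0 (act Y (Suc m) (Suc n) (Cop m \<theta>) y) = act Y 0 (Suc n) z0 y"
    using is_ssetD(3)[OF Y z0_in Cop_in[OF \<theta>] x(3)] by (simp add: Cop_z0)
  moreover have "act Y m (Suc m) (d0 m) (act Y (Suc m) (Suc n) (Cop m \<theta>) y) = p m (act X m n \<theta> x)"
    using is_ssetD(3)[OF Y d0_in Cop_in[OF \<theta>] x(3)] is_ssetD(3)[OF Y \<theta> d0_in x(3)] x(5)
      smapD(2)[OF p \<theta> x(2)]
    by (simp add: Cop_d0[OF \<theta>])
  ultimately show "act (Ys X Y p x0) m n \<theta> z \<in> cells (Ys X Y p x0) m"
    using x is_ssetD(1)[OF Y Cop_in[OF \<theta>] x(3)] is_ssetD(1)[OF X \<theta> x(2)] by (simp add: Ys_act Ys_cells)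
next
  fix n z assume z: "z \<in> cells (Ys X Y p x0) n"
  then obtain x y where x: "z = [(x, y)]" "x \<in> cells X n" "y \<in> cells Y (Suc n)"
    unfolding Ys_cells by blast
  show "act (Ys X Y p x0) n n (idop n) z = z"
    using x is_ssetD(2)[OF X x(2)] is_ssetD(2)[OF Y x(3)] by (simp add: Ys_act Cop_id)
next
  fix l m n \<phi> \<theta> z assume \<phi>: "\<phi> \<in> simp_ops l m" and \<theta>: "\<theta> \<in> simp_ops m n" and z: "z \<in> cells (Ys X Y p x0) n"
  then obtain x y where x: "z = [(x, y)]" "x \<in> cells X n" "y \<in> cells Y (Suc n)"
    unfolding Ys_cells by blast
  show "act (Ys X Y p x0) l m \<phi> (act (Ys X Y p x0) m n \<theta> z) = act (Ys X Y p x0) l n (cmp l \<theta> \<phi>) z"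
    using x is_ssetD(3)[OF Y Cop_in[OF \<phi>] Cop_in[OF \<theta>] x(3)] is_ssetD(3)[OF X \<phi> \<theta> x(2)]
    by (simp add: Ys_act Cop_cmp[OF \<phi>])
qed

lemma smap_qs:
  fixes X :: "'x sset" and Y :: "'w sset"
  assumes X: "is_sset X" and Y: "is_sset Y" and p: "smap X Y p" and x0: "x0 \<in> cells X 0"
  shows "smap (Xs X x0 :: ('x \<times> 'w) list sset) (Ys X Y p x0) (qs X p)"
  unfolding smap_def
proof (intro conjI allI impI)
  fix n and z :: "('x \<times> 'w) list" assume z: "z \<in> cells (Xs X x0) n"
  then obtain x where x: "z = [(x, undefined)]" "x \<in> cells X (Suc n)" "act X 0 (Suc n) z0 x = x0"
    unfolding Xs_cells by blast
  have "act Y 0 (Suc n) z0 (p (Suc n) x) = p 0 x0" using smapD(2)[OF p z0_in x(2)] x(3) by simp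
  moreover have "act Y n (Suc n) (d0 n) (p (Suc n) x) = p n (act X n (Suc n) (d0 n) x)"
    using smapD(2)[OF p d0_in x(2)] by simp
  ultimately show "qs X p n z \<in> cells (Ys X Y p x0) n"
    using x is_ssetD(1)[OF X d0_in x(2)] smapD(1)[OF p x(2)] by (simp add: qs_eq Ys_cells)
next
  fix m n \<theta> and z :: "('x \<times> 'w) list" assume \<theta>: "\<theta> \<in> simp_ops m n" and z: "z \<in> cells (Xs X x0) n"
  then obtain x where x: "z = [(x, undefined)]" "x \<in> cells X (Suc n)" "act X 0 (Suc n) z0 x = x0"
    unfolding Xs_cells by blast
  show "qs X p m (act (Xs X x0) m n \<theta> z) = act (Ys X Y p x0) m n \<theta> (qs X p n z)"
    using x is_ssetD(3)[OF X d0_in Cop_in[OF \<theta>] x(2)] is_ssetD(3)[OF X \<theta> d0_in x(2)]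
      smapD(2)[OF p Cop_in[OF \<theta>] x(2)]
    by (simp add: Xs_act Ys_act qs_eq Cop_d0[OF \<theta>])
qed


section \<open>Operator combinatorics\<close>

definition dec :: "nat \<Rightarrow> (nat \<Rightarrow> nat) \<Rightarrow> nat \<Rightarrow> nat" where
  "dec m \<tau> = (\<lambda>i. if i \<le> m then \<tau> i - 1 else 0)"

definition piz :: "nat \<Rightarrow> nat \<Rightarrow> nat \<Rightarrow> nat" where
  "piz m z = (\<lambda>i. if i \<le> m then (if i < z then 0 else Suc (i - z)) else 0)"

definition thz :: "nat \<Rightarrow> nat \<Rightarrow> (nat \<Rightarrow> nat) \<Rightarrow> nat \<Rightarrow> nat" where
  "thz m z \<tau> = (\<lambda>i. if i \<le> m - z then \<tau> (i + z) - 1 else 0)"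

lemma dec_in: "\<tau> \<in> simp_ops m (Suc n) \<Longrightarrow> dec m \<tau> \<in> simp_ops m n"
  unfolding dec_def simp_ops_def by (auto intro: diff_le_mono)

lemma dec_d0:
  assumes "\<tau> \<in> simp_ops m (Suc n)" "\<tau> 0 \<noteq> 0"
  shows "cmp m (d0 n) (dec m \<tau>) = \<tau>"
proof (rule simp_ops_eqI[OF cmp_closed[OF d0_in dec_in[OF assms(1)]] assms(1)])
  fix i assume i: "i \<le> m"
  have "\<tau> 0 \<le> \<tau> i" using simp_opsD(1)[OF assms(1), of 0 i] i by simp
  then show "cmp m (d0 n) (dec m \<tau>) i = \<tau> i"
    using i assms simp_opsD(2)[OF assms(1) i] unfolding cmp_def d0_def dec_def by auto
qed

lemma dec_cmp_d0:
  assumes "\<rho> \<in> simp_ops m n"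
  shows "dec m (cmp m (d0 n) \<rho>) = \<rho>" "cmp m (d0 n) \<rho> 0 \<noteq> 0"
  using assms unfolding dec_def cmp_def d0_def simp_ops_def by (auto intro!: ext)

lemma piz_in: "z \<le> m \<Longrightarrow> piz m z \<in> simp_ops m (Suc (m - z))"
  unfolding piz_def simp_ops_def by auto

lemma thz_in:
  assumes "\<rho> \<in> simp_ops m (Suc l)" "z \<le> m"
  shows "thz m z \<rho> \<in> simp_ops (m - z) l"
proof (rule simp_opsI)
  fix i j assume "i \<le> j" "j \<le> m - z"
  then show "thz m z \<rho> i \<le> thz m z \<rho> j"
    using simp_opsD(1)[OF assms(1), of "i + z" "j + z"] assms(2) unfolding thz_def by (simp add: diff_le_mono)
next
  fix i assume i: "i \<le> m - z"
  then have "i + z \<le> m" using assms(2) by simp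
  then have "\<rho> (i + z) \<le> Suc l" using simp_opsD(2)[OF assms(1), of "i + z"] by simp
  then show "thz m z \<rho> i \<le> l" using i unfolding thz_def by simp
next
  fix i assume "i > m - z" then show "thz m z \<rho> i = 0" unfolding thz_def by simp
qed

lemma decomp:
  assumes \<rho>: "\<rho> \<in> simp_ops m (Suc l)" and z: "z \<le> m" "1 \<le> z"
    and zero: "\<And>i. i < z \<Longrightarrow> \<rho> i = 0" and nz: "\<And>i. z \<le> i \<Longrightarrow> i \<le> m \<Longrightarrow> \<rho> i \<noteq> 0"
  shows "\<rho> = cmp m (Cop (m - z) (thz m z \<rho>)) (piz m z)"
proof (rule simp_ops_eqI[OF \<rho> cmp_closed[OF Cop_in[OF thz_in[OF \<rho> z(1)]] piz_in[OF z(1)]]])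
  fix i assume i: "i \<le> m"
  show "\<rho> i = cmp m (Cop (m - z) (thz m z \<rho>)) (piz m z) i"
  proof (cases "i < z")
    case True then show ?thesis using zero i unfolding cmp_def Cop_def piz_def by simp
  next
    case False
    then have "\<rho> i \<noteq> 0" using nz i by simp
    then show ?thesis using False i unfolding cmp_def Cop_def piz_def thz_def by simp
  qed
qed

lemma thz_cmp:
  assumes \<rho>: "\<rho> \<in> simp_ops m (Suc l)" and z: "z \<le> m"
    and nz: "\<And>i. z \<le> i \<Longrightarrow> i \<le> m \<Longrightarrow> \<rho> i \<noteq> 0"
  shows "cmp (m - z) \<theta> (thz m z \<rho>) = thz m z (cmp m (Cop l \<theta>) \<rho>)"
proof
  fix i
  show "cmp (m - z) \<theta> (thz m z \<rho>) i = thz m z (cmp m (Cop l \<theta>) \<rho>) i"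
  proof (cases "i \<le> m - z")
    case True
    then have "\<rho> (i + z) \<noteq> 0" "\<rho> (i + z) \<le> Suc l" using nz[of "i + z"] z simp_opsD(2)[OF \<rho>, of "i+z"] by auto
    then show ?thesis using True z unfolding cmp_def thz_def Cop_def by auto
  qed (simp add: cmp_def thz_def)
qed

lemma least_facts:
  assumes \<rho>: "\<rho> \<in> simp_ops m l" and r0: "\<rho> 0 = 0" and ex: "\<exists>i\<le>m. \<rho> i \<noteq> 0"
  defines "z \<equiv> LEAST i. \<rho> i \<noteq> 0"
  shows "z \<le> m" "1 \<le> z" "\<And>i. i < z \<Longrightarrow> \<rho> i = 0" "\<And>i. z \<le> i \<Longrightarrow> i \<le> m \<Longrightarrow> \<rho> i \<noteq> 0"
proof -
  obtain i0 where i0: "i0 \<le> m" "\<rho> i0 \<noteq> 0" using ex by blast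
  have zl: "\<rho> z \<noteq> 0" unfolding z_def by (rule LeastI[of _ i0]) (rule i0(2))
  have "z \<le> i0" unfolding z_def by (rule Least_le) (rule i0(2))
  then show "z \<le> m" using i0 by simp
  show "1 \<le> z" using zl r0 by (cases z) auto
  show "\<And>i. i < z \<Longrightarrow> \<rho> i = 0" unfolding z_def using not_less_Least by blast
  show "\<And>i. z \<le> i \<Longrightarrow> i \<le> m \<Longrightarrow> \<rho> i \<noteq> 0"
    using simp_opsD(1)[OF \<rho>] zl by (metis le_zero_eq)
qed

lemma horn_cells_iff:
  "\<theta> \<in> cells (horn n k) m \<longleftrightarrow> \<theta> \<in> simp_ops m n \<and> (\<exists>j\<le>n. j \<noteq> k \<and> (\<forall>i\<le>m. \<theta> i \<noteq> j))"
proof -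
  have "(\<not> ({0..n} - {k} \<subseteq> \<theta> ` {0..m})) \<longleftrightarrow> (\<exists>j\<le>n. j \<noteq> k \<and> (\<forall>i\<le>m. \<theta> i \<noteq> j))"
    by (auto simp: subset_iff image_iff) (metis atLeastAtMost_iff le0)+
  then show ?thesis unfolding horn_def by simp
qed

lemma horn_act: "act (horn n k) m l \<phi> \<theta> = cmp m \<theta> \<phi>"
  unfolding horn_def by simp

lemma simplex_act: "act (simplex n) m l \<phi> \<theta> = cmp m \<theta> \<phi>"
  unfolding simplex_def by simp

lemma simplex_cells: "cells (simplex n) m = simp_ops m n"
  unfolding simplex_def by simp



locale kctx =
  fixes X :: "'x sset" and Y :: "'w sset" and p x0 n k
    and uH :: "nat \<Rightarrow> (nat \<Rightarrow> nat) \<Rightarrow> ('x \<times> 'w) list"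
    and vH :: "nat \<Rightarrow> (nat \<Rightarrow> nat) \<Rightarrow> ('x \<times> 'w) list"
  assumes X: "is_sset X" and Y: "is_sset Y" and p: "smap X Y p" and x0: "x0 \<in> cells X 0"
    and n1: "1 \<le> n" and kn: "k \<le> n"
    and uH: "smap (horn n k) (Xs X x0) uH"
    and vH: "smap (simplex n) (Ys X Y p x0) vH"
    and comm: "\<And>m \<theta>. \<theta> \<in> cells (horn n k) m \<Longrightarrow> qs X p m (uH m \<theta>) = vH m (horn_incl m \<theta>)"
begin

definition "xTop = fst (hd (vH n (idop n)))"
definition "yTop = snd (hd (vH n (idop n)))"
definition "xu m \<theta> = fst (hd (uH m \<theta>))"

lemma top_props:
  "vH n (idop n) = [(xTop, yTop)]" "xTop \<in> cells X n" "yTop \<in> cells Y (Suc n)"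
  "act Y 0 (Suc n) z0 yTop = p 0 x0" "act Y n (Suc n) (d0 n) yTop = p n xTop"
proof -
  have "vH n (idop n) \<in> cells (Ys X Y p x0) n"
    using smapD(1)[OF vH] idop_in by (simp add: simplex_cells)
  then obtain x y where "vH n (idop n) = [(x, y)]" "x \<in> cells X n" "y \<in> cells Y (Suc n)"
    "act Y 0 (Suc n) z0 y = p 0 x0" "act Y n (Suc n) (d0 n) y = p n x"
    unfolding Ys_cells by blast
  then show "vH n (idop n) = [(xTop, yTop)]" "xTop \<in> cells X n" "yTop \<in> cells Y (Suc n)"
    "act Y 0 (Suc n) z0 yTop = p 0 x0" "act Y n (Suc n) (d0 n) yTop = p n xTop"
    unfolding xTop_def yTop_def by auto
qed

lemma vH_eq:
  assumes \<theta>: "\<theta> \<in> simp_ops m n"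
  shows "vH m \<theta> = [(act X m n \<theta> xTop, act Y (Suc m) (Suc n) (Cop m \<theta>) yTop)]"
proof -
  have "vH m (act (simplex n) m n \<theta> (idop n)) = act (Ys X Y p x0) m n \<theta> (vH n (idop n))"
    using smapD(2)[OF vH \<theta>] idop_in by (simp add: simplex_cells)
  then show ?thesis using \<theta> by (simp add: simplex_act cmp_id_left top_props(1) Ys_act)
qed

lemma uH_props:
  assumes \<theta>: "\<theta> \<in> cells (horn n k) m"
  shows "uH m \<theta> = [(xu m \<theta>, undefined)]" "xu m \<theta> \<in> cells X (Suc m)" "act X 0 (Suc m) z0 (xu m \<theta>) = x0"
proof -
  have "uH m \<theta> \<in> cells (Xs X x0) m" using smapD(1)[OF uH \<theta>] .
  then obtain x where "uH m \<theta> = [(x, undefined)]" "x \<in> cells X (Suc m)" "act X 0 (Suc m) z0 x = x0"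
    unfolding Xs_cells by blast
  then show "uH m \<theta> = [(xu m \<theta>, undefined)]" "xu m \<theta> \<in> cells X (Suc m)" "act X 0 (Suc m) z0 (xu m \<theta>) = x0"
    unfolding xu_def by auto
qed

lemma horn_simp: "\<theta> \<in> cells (horn n k) m \<Longrightarrow> \<theta> \<in> simp_ops m n"
  unfolding horn_cells_iff by (rule conjunct1)

lemma horn_cmp:
  assumes "\<theta> \<in> cells (horn n k) l" "\<phi> \<in> simp_ops m l"
  shows "cmp m \<theta> \<phi> \<in> cells (horn n k) m"
proof -
  obtain j where j: "j \<le> n" "j \<noteq> k" "\<forall>i\<le>l. \<theta> i \<noteq> j" using assms(1) horn_cells_iff by blast
  have "\<forall>i\<le>m. cmp m \<theta> \<phi> i \<noteq> j" using j simp_opsD(2)[OF assms(2)] unfolding cmp_def by simp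
  moreover have "cmp m \<theta> \<phi> \<in> simp_ops m n"
    using cmp_closed[OF horn_simp[OF assms(1)] assms(2)] .
  ultimately show ?thesis unfolding horn_cells_iff using j(1,2) by blast
qed

lemma xu_nat:
  assumes \<theta>: "\<theta> \<in> cells (horn n k) l" and \<phi>: "\<phi> \<in> simp_ops m l"
  shows "xu m (cmp m \<theta> \<phi>) = act X (Suc m) (Suc l) (Cop m \<phi>) (xu l \<theta>)"
proof -
  have "uH m (act (horn n k) m l \<phi> \<theta>) = act (Xs X x0) m l \<phi> (uH l \<theta>)"
    using smapD(2)[OF uH \<phi> \<theta>] .
  then show ?thesis unfolding horn_act uH_props(1)[OF \<theta>] uH_props(1)[OF horn_cmp[OF \<theta> \<phi>]] Xs_act by simp
qed

lemma xu_d0: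
  assumes \<theta>: "\<theta> \<in> cells (horn n k) m"
  shows "act X m (Suc m) (d0 m) (xu m \<theta>) = act X m n \<theta> xTop"
    and "p (Suc m) (xu m \<theta>) = act Y (Suc m) (Suc n) (Cop m \<theta>) yTop"
  using comm[OF \<theta>] unfolding uH_props(1)[OF \<theta>] qs_eq horn_incl_def vH_eq[OF horn_simp[OF \<theta>]]
  by simp_all

definition Ufac :: "nat \<Rightarrow> (nat \<Rightarrow> nat) \<Rightarrow> 'x \<Rightarrow> bool" where
  "Ufac m \<tau> v \<longleftrightarrow> (\<exists>l \<theta> \<rho>. \<theta> \<in> cells (horn n k) l \<and> \<rho> \<in> simp_ops m (Suc l) \<and>
        \<tau> = cmp m (Cop l \<theta>) \<rho> \<and> v = act X m (Suc l) \<rho> (xu l \<theta>))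
     \<or> (\<exists>\<rho>. \<rho> \<in> simp_ops m n \<and> \<tau> = cmp m (d0 n) \<rho> \<and> v = act X m n \<rho> xTop)"

definition can :: "nat \<Rightarrow> (nat \<Rightarrow> nat) \<Rightarrow> 'x" where
  "can m \<tau> = (if \<tau> 0 \<noteq> 0 then act X m n (dec m \<tau>) xTop
     else if (\<forall>i\<le>m. \<tau> i = 0) then act X m 0 z0 x0
     else act X m (Suc (m - (LEAST i. \<tau> i \<noteq> 0))) (piz m (LEAST i. \<tau> i \<noteq> 0))
            (xu (m - (LEAST i. \<tau> i \<noteq> 0)) (thz m (LEAST i. \<tau> i \<noteq> 0) \<tau>)))"


lemma z0_any: "z0 \<in> simp_ops m N"
  unfolding z0_def simp_ops_def by auto

lemma xu_z0: "\<theta> \<in> cells (horn n k) l \<Longrightarrow> act X m (Suc l) z0 (xu l \<theta>) = act X m 0 z0 x0"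
  using is_ssetD(3)[OF X z0_any z0_in uH_props(2)] uH_props(3) by (simp add: cmp_z0_z0)

lemma Ufac_val:
  assumes U: "Ufac m \<tau> v"
  shows "v = can m \<tau>"
  using U unfolding Ufac_def
proof (elim disjE exE conjE)
  fix \<rho> assume \<rho>: "\<rho> \<in> simp_ops m n" "\<tau> = cmp m (d0 n) \<rho>" "v = act X m n \<rho> xTop"
  then show "v = can m \<tau>" unfolding can_def using dec_cmp_d0[OF \<rho>(1)] by simp
next
  fix l \<theta> \<rho> assume \<theta>: "\<theta> \<in> cells (horn n k) l" and \<rho>: "\<rho> \<in> simp_ops m (Suc l)"
    and \<tau>: "\<tau> = cmp m (Cop l \<theta>) \<rho>" and v: "v = act X m (Suc l) \<rho> (xu l \<theta>)"
  have \<theta>s: "\<theta> \<in> simp_ops l n" using horn_simp[OF \<theta>] .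
  have xu: "xu l \<theta> \<in> cells X (Suc l)" using uH_props(2)[OF \<theta>] .
  have zeq: "(\<tau> i = 0) = (\<rho> i = 0)" for i
  proof (cases "i \<le> m")
    case True
    then have "\<rho> i \<le> Suc l" using simp_opsD(2)[OF \<rho>] by simp
    then show ?thesis using True unfolding \<tau> cmp_def Cop_def by auto
  next
    case False
    then show ?thesis using simp_opsD(3)[OF \<rho>] unfolding \<tau> cmp_def by simp
  qed
  then have leq: "(LEAST i. \<tau> i \<noteq> 0) = (LEAST i. \<rho> i \<noteq> 0)" by simp
  show "v = can m \<tau>"
  proof (cases "\<rho> 0 = 0")
    case False
    then have t0: "\<tau> 0 \<noteq> 0" using zeq by simp
    have r: "\<rho> = cmp m (d0 l) (dec m \<rho>)" using dec_d0[OF \<rho> False] by simp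
    have "v = act X m l (dec m \<rho>) (act X l (Suc l) (d0 l) (xu l \<theta>))"
      using v is_ssetD(3)[OF X dec_in[OF \<rho>] d0_in xu] r by simp
    also have "\<dots> = act X m n (cmp m \<theta> (dec m \<rho>)) xTop"
      using xu_d0(1)[OF \<theta>] is_ssetD(3)[OF X dec_in[OF \<rho>] \<theta>s top_props(2)] by simp
    also have "cmp m \<theta> (dec m \<rho>) = dec m \<tau>"
    proof
      fix i show "cmp m \<theta> (dec m \<rho>) i = dec m \<tau> i"
      proof (cases "i \<le> m")
        case True
        then have "\<rho> 0 \<le> \<rho> i" "\<rho> i \<le> Suc l" using simp_opsD(1,2)[OF \<rho>] by auto
        then show ?thesis using True False unfolding cmp_def dec_def \<tau> Cop_def by auto
      qed (simp add: cmp_def dec_def)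
    qed
    finally show ?thesis unfolding can_def using t0 by simp
  next
    case r0: True
    show ?thesis
    proof (cases "\<forall>i\<le>m. \<rho> i = 0")
      case True
      then have "\<rho> = z0" by (intro simp_ops_eqI[OF \<rho> z0_in']) (simp add: z0_def)
      then have "v = act X m 0 z0 x0" using v xu_z0[OF \<theta>] by simp
      then show ?thesis unfolding can_def using True zeq by simp
    next
      case False
      then have ex: "\<exists>i\<le>m. \<rho> i \<noteq> 0" by blast
      define z where "z = (LEAST i. \<rho> i \<noteq> 0)"
      note lf = least_facts[OF \<rho> r0 ex, folded z_def]
      have \<psi>: "thz m z \<rho> \<in> simp_ops (m - z) l" using thz_in[OF \<rho> lf(1)] .
      have dc: "\<rho> = cmp m (Cop (m - z) (thz m z \<rho>)) (piz m z)" using decomp[OF \<rho> lf] .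
      have "v = act X m (Suc (m - z)) (piz m z) (act X (Suc (m - z)) (Suc l) (Cop (m - z) (thz m z \<rho>)) (xu l \<theta>))"
        using v is_ssetD(3)[OF X piz_in[OF lf(1)] Cop_in[OF \<psi>] xu] dc by simp
      also have "\<dots> = act X m (Suc (m - z)) (piz m z) (xu (m - z) (cmp (m - z) \<theta> (thz m z \<rho>)))"
        using xu_nat[OF \<theta> \<psi>] by simp
      also have "cmp (m - z) \<theta> (thz m z \<rho>) = thz m z \<tau>"
        unfolding \<tau> by (rule thz_cmp[OF \<rho> lf(1) lf(4)])
      finally have vv: "v = act X m (Suc (m - z)) (piz m z) (xu (m - z) (thz m z \<tau>))" .
      have t0: "\<tau> 0 = 0" using zeq r0 by simp
      have nall: "\<not> (\<forall>i\<le>m. \<tau> i = 0)" using False zeq by simp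
      have zt: "(LEAST i. \<tau> i \<noteq> 0) = z" using leq z_def by simp
      have "can m \<tau> = act X m (Suc (m - z)) (piz m z) (xu (m - z) (thz m z \<tau>))"
        unfolding can_def zt using t0
        by (subst if_not_P, simp) (subst if_not_P[OF nall], rule refl)
      then show ?thesis using vv by simp
    qed
  qed
qed

lemma Ufac_can:
  assumes \<tau>h: "\<tau> \<in> cells (horn (Suc n) (Suc k)) m"
  shows "Ufac m \<tau> (can m \<tau>)"
proof -
  obtain j where j: "j \<le> Suc n" "j \<noteq> Suc k" "\<forall>i\<le>m. \<tau> i \<noteq> j" and \<tau>: "\<tau> \<in> simp_ops m (Suc n)"
    using \<tau>h unfolding horn_cells_iff by blast
  show ?thesis
  proof (cases "\<tau> 0 = 0")
    case False
    then show ?thesis unfolding Ufac_def can_def using dec_in[OF \<tau>] dec_d0[OF \<tau> False] by auto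
  next
    case t0: True
    show ?thesis
    proof (cases "\<forall>i\<le>m. \<tau> i = 0")
      case True
      define \<theta>k where "\<theta>k = (\<lambda>i::nat. if i = 0 then k else 0)"
      have \<theta>ks: "\<theta>k \<in> simp_ops 0 n" unfolding \<theta>k_def simp_ops_def using kn by auto
      have "\<forall>i\<le>0. \<theta>k i \<noteq> (if k = 0 then 1 else 0)" unfolding \<theta>k_def by auto
      then have \<theta>kh: "\<theta>k \<in> cells (horn n k) 0"
        unfolding horn_cells_iff using \<theta>ks n1 by (intro conjI exI[of _ "if k = 0 then 1 else 0"]) auto
      have "\<tau> = cmp m (Cop 0 \<theta>k) z0"
        by (rule simp_ops_eqI[OF \<tau> cmp_closed[OF Cop_in[OF \<theta>ks] z0_any]])
           (simp add: True cmp_def Cop_def z0_def)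
      then show ?thesis unfolding Ufac_def can_def using True t0 \<theta>kh z0_any xu_z0[OF \<theta>kh]
        by (intro disjI1 exI[of _ 0] exI[of _ \<theta>k] exI[of _ z0]) simp
    next
      case False
      then have ex: "\<exists>i\<le>m. \<tau> i \<noteq> 0" by blast
      define z where "z = (LEAST i. \<tau> i \<noteq> 0)"
      note lf = least_facts[OF \<tau> t0 ex, folded z_def]
      have th: "thz m z \<tau> \<in> simp_ops (m - z) n" using thz_in[OF \<tau> lf(1)] .
      have j0: "j \<noteq> 0" using j(3) t0 by auto
      have "\<forall>i\<le>m - z. thz m z \<tau> i \<noteq> j - 1"
      proof (intro allI impI)
        fix i assume i: "i \<le> m - z"
        then have "\<tau> (i + z) \<noteq> 0" "\<tau> (i + z) \<noteq> j" using lf(1,4) j(3) by auto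
        then show "thz m z \<tau> i \<noteq> j - 1" using i j0 unfolding thz_def by auto
      qed
      then have thh: "thz m z \<tau> \<in> cells (horn n k) (m - z)"
        unfolding horn_cells_iff using th j j0 by (intro conjI exI[of _ "j - 1"]) auto
      have dc: "\<tau> = cmp m (Cop (m - z) (thz m z \<tau>)) (piz m z)" using decomp[OF \<tau> lf] .
      have zt: "(LEAST i. \<tau> i \<noteq> 0) = z" using z_def by simp
      have cv: "can m \<tau> = act X m (Suc (m - z)) (piz m z) (xu (m - z) (thz m z \<tau>))"
        unfolding can_def zt using t0
        by (subst if_not_P, simp) (subst if_not_P[OF False], rule refl)
      show ?thesis unfolding Ufac_def cv
        apply (rule disjI1)
        apply (rule exI[where x="m - z"])
        apply (rule exI[where x="thz m z \<tau>"])
        apply (rule exI[where x="piz m z"])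
        using thh piz_in[OF lf(1)] dc by simp
    qed
  qed
qed

lemma Ufac_nat:
  assumes U: "Ufac m \<tau> v" and \<phi>: "\<phi> \<in> simp_ops m' m"
  shows "Ufac m' (cmp m' \<tau> \<phi>) (act X m' m \<phi> v)"
  using U unfolding Ufac_def
proof (elim disjE exE conjE)
  fix \<rho> assume \<rho>: "\<rho> \<in> simp_ops m n" "\<tau> = cmp m (d0 n) \<rho>" "v = act X m n \<rho> xTop"
  then show "(\<exists>l \<theta> \<rho>. \<theta> \<in> cells (horn n k) l \<and> \<rho> \<in> simp_ops m' (Suc l) \<and>
        cmp m' \<tau> \<phi> = cmp m' (Cop l \<theta>) \<rho> \<and> act X m' m \<phi> v = act X m' (Suc l) \<rho> (xu l \<theta>))
     \<or> (\<exists>\<rho>. \<rho> \<in> simp_ops m' n \<and> cmp m' \<tau> \<phi> = cmp m' (d0 n) \<rho> \<and> act X m' m \<phi> v = act X m' n \<rho> xTop)"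
    using cmp_closed[OF \<rho>(1) \<phi>] cmp_assoc[OF \<phi>] is_ssetD(3)[OF X \<phi> \<rho>(1) top_props(2)]
    by (intro disjI2 exI[of _ "cmp m' \<rho> \<phi>"]) simp
next
  fix l \<theta> \<rho> assume \<theta>: "\<theta> \<in> cells (horn n k) l" and \<rho>: "\<rho> \<in> simp_ops m (Suc l)"
    and \<tau>: "\<tau> = cmp m (Cop l \<theta>) \<rho>" and v: "v = act X m (Suc l) \<rho> (xu l \<theta>)"
  then show "(\<exists>l \<theta> \<rho>. \<theta> \<in> cells (horn n k) l \<and> \<rho> \<in> simp_ops m' (Suc l) \<and>
        cmp m' \<tau> \<phi> = cmp m' (Cop l \<theta>) \<rho> \<and> act X m' m \<phi> v = act X m' (Suc l) \<rho> (xu l \<theta>))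
     \<or> (\<exists>\<rho>. \<rho> \<in> simp_ops m' n \<and> cmp m' \<tau> \<phi> = cmp m' (d0 n) \<rho> \<and> act X m' m \<phi> v = act X m' n \<rho> xTop)"
    using cmp_closed[OF \<rho> \<phi>] cmp_assoc[OF \<phi>] is_ssetD(3)[OF X \<phi> \<rho> uH_props(2)[OF \<theta>]]
    by (intro disjI1 exI[of _ l] exI[of _ \<theta>] exI[of _ "cmp m' \<rho> \<phi>"]) simp
qed

lemma Ufac_in:
  assumes U: "Ufac m \<tau> v"
  shows "v \<in> cells X m"
  using U unfolding Ufac_def
  using is_ssetD(1)[OF X _ uH_props(2)] is_ssetD(1)[OF X _ top_props(2)] by blast

lemma Ufac_p:
  assumes U: "Ufac m \<tau> v"
  shows "p m v = act Y m (Suc n) \<tau> yTop"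
  using U unfolding Ufac_def
proof (elim disjE exE conjE)
  fix \<rho> assume \<rho>: "\<rho> \<in> simp_ops m n" "\<tau> = cmp m (d0 n) \<rho>" "v = act X m n \<rho> xTop"
  then show ?thesis
    using smapD(2)[OF p \<rho>(1) top_props(2)] top_props(5) is_ssetD(3)[OF Y \<rho>(1) d0_in top_props(3)] by simp
next
  fix l \<theta> \<rho> assume \<theta>: "\<theta> \<in> cells (horn n k) l" and \<rho>: "\<rho> \<in> simp_ops m (Suc l)"
    and \<tau>: "\<tau> = cmp m (Cop l \<theta>) \<rho>" and v: "v = act X m (Suc l) \<rho> (xu l \<theta>)"
  then show ?thesis
    using smapD(2)[OF p \<rho> uH_props(2)[OF \<theta>]] xu_d0(2)[OF \<theta>]
      is_ssetD(3)[OF Y \<rho> Cop_in[OF horn_simp[OF \<theta>]] top_props(3)] by simp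
qed


lemma z0_horn: "z0 \<in> cells (horn (Suc n) (Suc k)) 0"
  unfolding horn_cells_iff using n1 kn z0_any
  by (intro conjI exI[of _ "if k = n then 1 else Suc n"]) (auto simp: z0_def)

lemma can_z0: "can 0 z0 = x0"
proof -
  have "can 0 z0 = act X 0 0 z0 x0" unfolding can_def by (simp add: z0_def)
  then show ?thesis using is_ssetD(2)[OF X x0] z0_idop by simp
qed

lemma Cop_horn:
  assumes a: "a \<in> cells (horn n k) m"
  shows "Cop m a \<in> cells (horn (Suc n) (Suc k)) (Suc m)"
proof -
  obtain j where j: "j \<le> n" "j \<noteq> k" "\<forall>i\<le>m. a i \<noteq> j" using a horn_cells_iff by blast
  have "\<forall>i\<le>Suc m. Cop m a i \<noteq> Suc j"
  proof (intro allI impI)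
    fix i assume "i \<le> Suc m"
    then show "Cop m a i \<noteq> Suc j" using j(3)[rule_format, of "i - 1"] unfolding Cop_def by auto
  qed
  then show ?thesis unfolding horn_cells_iff using j Cop_in[OF horn_simp[OF a]]
    by (intro conjI exI[of _ "Suc j"]) auto
qed

lemma d0_horn:
  assumes b: "b \<in> simp_ops m n"
  shows "cmp m (d0 n) b \<in> cells (horn (Suc n) (Suc k)) m"
  unfolding horn_cells_iff using cmp_closed[OF d0_in b] simp_opsD(2)[OF b]
  by (intro conjI exI[of _ 0]) (auto simp: cmp_def d0_def)

lemma can_Cop:
  assumes a: "a \<in> cells (horn n k) m"
  shows "can (Suc m) (Cop m a) = xu m a"
proof -
  have "Ufac (Suc m) (Cop m a) (xu m a)"
    unfolding Ufac_def
    apply (rule disjI1)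
    apply (rule exI[where x=m])
    apply (rule exI[where x=a])
    apply (rule exI[where x="idop (Suc m)"])
    using a idop_in cmp_id_right[OF Cop_in[OF horn_simp[OF a]]] is_ssetD(2)[OF X uH_props(2)[OF a]]
    by simp
  then show ?thesis using Ufac_val by simp
qed

lemma can_d0:
  assumes b: "b \<in> simp_ops m n"
  shows "can m (cmp m (d0 n) b) = act X m n b xTop"
proof -
  have "Ufac m (cmp m (d0 n) b) (act X m n b xTop)"
    unfolding Ufac_def using b by blast
  then show ?thesis using Ufac_val by simp
qed

lemma kan_lift:
  assumes rf: "llp (horn (Suc n) (Suc k)) (simplex (Suc n)) horn_incl X Y p"
  shows "\<exists>h. smap (simplex n) (Xs X x0) h \<and> (\<forall>m a. a \<in> cells (horn n k) m \<longrightarrow> h m (horn_incl m a) = uH m a)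
            \<and> (\<forall>m b. b \<in> cells (simplex n) m \<longrightarrow> qs X p m (h m b) = vH m b)"
proof -
  define V where "V = (\<lambda>m \<tau>. act Y m (Suc n) \<tau> yTop)"
  have sU: "smap (horn (Suc n) (Suc k)) X can"
    unfolding smap_def horn_act
  proof (intro conjI allI impI)
    fix m \<tau> assume "\<tau> \<in> cells (horn (Suc n) (Suc k)) m"
    then show "can m \<tau> \<in> cells X m" using Ufac_in[OF Ufac_can] by blast
  next
    fix m l \<phi> \<tau> assume \<phi>: "\<phi> \<in> simp_ops m l" and \<tau>: "\<tau> \<in> cells (horn (Suc n) (Suc k)) l"
    show "can m (cmp m \<tau> \<phi>) = act X m l \<phi> (can l \<tau>)"
      using Ufac_val[OF Ufac_nat[OF Ufac_can[OF \<tau>] \<phi>]] by simp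
  qed
  have sV: "smap (simplex (Suc n)) Y V"
    unfolding smap_def simplex_act simplex_cells V_def
  proof (intro conjI allI impI)
    fix m \<tau> assume "\<tau> \<in> simp_ops m (Suc n)"
    then show "act Y m (Suc n) \<tau> yTop \<in> cells Y m" using is_ssetD(1)[OF Y _ top_props(3)] by blast
  next
    fix m l \<phi> \<tau> assume \<phi>: "\<phi> \<in> simp_ops m l" and \<tau>: "\<tau> \<in> simp_ops l (Suc n)"
    show "act Y m (Suc n) (cmp m \<tau> \<phi>) yTop = act Y m l \<phi> (act Y l (Suc n) \<tau> yTop)"
      using is_ssetD(3)[OF Y \<phi> \<tau> top_props(3)] by simp
  qed
  have cm: "\<forall>m a. a \<in> cells (horn (Suc n) (Suc k)) m \<longrightarrow> p m (can m a) = V m (horn_incl m a)"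
    using Ufac_p[OF Ufac_can] unfolding V_def horn_incl_def by blast
  obtain H where H: "smap (simplex (Suc n)) X H"
    "\<And>m a. a \<in> cells (horn (Suc n) (Suc k)) m \<Longrightarrow> H m (horn_incl m a) = can m a"
    "\<And>m b. b \<in> cells (simplex (Suc n)) m \<Longrightarrow> p m (H m b) = V m b"
    using rf[unfolded llp_def, rule_format, OF sU sV cm[rule_format]] by blast
  have Hc: "H m a = can m a" if "a \<in> cells (horn (Suc n) (Suc k)) m" for m a
    using H(2)[OF that] unfolding horn_incl_def .
  define h where "h = (\<lambda>m \<theta>. [(H (Suc m) (Cop m \<theta>), undefined :: 'w)])"
  have hs: "smap (simplex n) (Xs X x0) h"
    unfolding smap_def simplex_act simplex_cells
  proof (intro conjI allI impI)
    fix m \<theta> assume \<theta>: "\<theta> \<in> simp_ops m n"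
    have Hin: "H (Suc m) (Cop m \<theta>) \<in> cells X (Suc m)"
      using smapD(1)[OF H(1)] Cop_in[OF \<theta>] by (simp add: simplex_cells)
    have "act X 0 (Suc m) z0 (H (Suc m) (Cop m \<theta>)) = H 0 (cmp 0 (Cop m \<theta>) z0)"
      using smapD(2)[OF H(1) z0_in, of "Cop m \<theta>"] Cop_in[OF \<theta>] by (simp add: simplex_cells simplex_act)
    also have "\<dots> = x0" using Cop_z0 Hc[OF z0_horn] can_z0 by simp
    finally show "h m \<theta> \<in> cells (Xs X x0) m" unfolding h_def Xs_cells using Hin by blast
  next
    fix m l \<phi> \<theta> assume \<phi>: "\<phi> \<in> simp_ops m l" and \<theta>: "\<theta> \<in> simp_ops l n"
    have "H (Suc m) (Cop m (cmp m \<theta> \<phi>)) = H (Suc m) (cmp (Suc m) (Cop l \<theta>) (Cop m \<phi>))"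
      using Cop_cmp[OF \<phi>] by simp
    also have "\<dots> = act X (Suc m) (Suc l) (Cop m \<phi>) (H (Suc l) (Cop l \<theta>))"
      using smapD(2)[OF H(1) Cop_in[OF \<phi>], of "Cop l \<theta>"] Cop_in[OF \<theta>] by (simp add: simplex_cells simplex_act)
    finally show "h m (cmp m \<theta> \<phi>) = act (Xs X x0) m l \<phi> (h l \<theta>)"
      unfolding h_def Xs_act by simp
  qed
  have hu: "\<forall>m a. a \<in> cells (horn n k) m \<longrightarrow> h m (horn_incl m a) = uH m a"
  proof (intro allI impI)
    fix m a assume a: "a \<in> cells (horn n k) m"
    show "h m (horn_incl m a) = uH m a"
      unfolding h_def horn_incl_def using Hc[OF Cop_horn[OF a]] can_Cop[OF a] uH_props(1)[OF a] by simp
  qed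
  have hv: "\<forall>m b. b \<in> cells (simplex n) m \<longrightarrow> qs X p m (h m b) = vH m b"
  proof (intro allI impI)
    fix m b assume "b \<in> cells (simplex n) m"
    then have b: "b \<in> simp_ops m n" by (simp add: simplex_cells)
    have "act X m (Suc m) (d0 m) (H (Suc m) (Cop m b)) = H m (cmp m (Cop m b) (d0 m))"
      using smapD(2)[OF H(1) d0_in, of "Cop m b"] Cop_in[OF b] by (simp add: simplex_cells simplex_act)
    also have "\<dots> = act X m n b xTop"
      using Cop_d0[OF b] Hc[OF d0_horn[OF b]] can_d0[OF b] by simp
    finally have 1: "act X m (Suc m) (d0 m) (H (Suc m) (Cop m b)) = act X m n b xTop" .
    have 2: "p (Suc m) (H (Suc m) (Cop m b)) = act Y (Suc m) (Suc n) (Cop m b) yTop"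
      using H(3)[of "Cop m b"] Cop_in[OF b] by (simp add: simplex_cells V_def)
    show "qs X p m (h m b) = vH m b"
      unfolding h_def qs_eq vH_eq[OF b] using 1 2 by simp
  qed
  show ?thesis using hs hu hv by blast
qed

end

lemma kan_qs:
  fixes X :: "'x sset" and Y :: "'w sset"
  assumes rf: "right_fibration X Y p" and x0: "x0 \<in> cells X 0"
  shows "kan_fibration (Xs X x0 :: ('x \<times> 'w) list sset) (Ys X Y p x0) (qs X p)"
proof -
  have X: "is_sset X" and Y: "is_sset Y" and p: "smap X Y p"
    and rl: "\<And>n k. 1 \<le> n \<Longrightarrow> 0 < k \<Longrightarrow> k \<le> n \<Longrightarrow> llp (horn n k) (simplex n) horn_incl X Y p"
    using rf unfolding right_fibration_def by auto
  show ?thesis unfolding kan_fibration_def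
  proof (intro conjI allI impI)
    show "is_sset (Xs X x0 :: ('x \<times> 'w) list sset)" using is_sset_Xs[OF X] .
    show "is_sset (Ys X Y p x0)" using is_sset_Ys[OF X Y p] .
    show "smap (Xs X x0 :: ('x \<times> 'w) list sset) (Ys X Y p x0) (qs X p)" using smap_qs[OF X Y p x0] .
    fix n k :: nat assume n1: "1 \<le> n" and kn: "k \<le> n"
    show "llp (horn n k) (simplex n) horn_incl (Xs X x0 :: ('x \<times> 'w) list sset) (Ys X Y p x0) (qs X p)"
      unfolding llp_def
    proof (intro allI impI)
      fix uH vH
      assume uH: "smap (horn n k) (Xs X x0 :: ('x \<times> 'w) list sset) uH"
        and vH: "smap (simplex n) (Ys X Y p x0) vH"
        and cm: "\<forall>m a. a \<in> cells (horn n k) m \<longrightarrow> qs X p m (uH m a) = vH m (horn_incl m a)"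
      interpret kctx X Y p x0 n k uH vH
        using X Y p x0 n1 kn uH vH cm by unfold_locales auto
      show "\<exists>h. smap (simplex n) (Xs X x0) h \<and> (\<forall>m a. a \<in> cells (horn n k) m \<longrightarrow> h m (horn_incl m a) = uH m a)
            \<and> (\<forall>m b. b \<in> cells (simplex n) m \<longrightarrow> qs X p m (h m b) = vH m b)"
        by (rule kan_lift[OF rl]) (use n1 kn in auto)
    qed
  qed
qed



locale mctx =
  fixes A :: "'a sset" and B :: "'b sset" and f :: "nat \<Rightarrow> 'a \<Rightarrow> 'b"
    and X :: "'x sset" and Y :: "'w sset" and p u v
  assumes A: "is_sset A" and B: "is_sset B" and f: "smap A B f"
    and an: "\<And>(X' :: ('x \<times> 'w) list sset) (Y' :: ('x \<times> 'w) list sset) q. kan_fibration X' Y' q \<Longrightarrow> llp A B f X' Y' q"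
    and rf: "right_fibration X Y p"
    and su: "smap (pushout A B (cone A) f (cone_incl A)) X u"
    and sv: "smap (cone B) Y v"
    and cm: "\<And>n a. a \<in> cells (pushout A B (cone A) f (cone_incl A)) n \<Longrightarrow> p n (u n a) = v n (cone_hat A B f n a)"
begin

lemma X: "is_sset X" and Y: "is_sset Y" and p: "smap X Y p"
  using rf unfolding right_fibration_def by auto

lemma CA: "is_sset (cone A)" using is_sset_cone[OF A] .
lemma CB: "is_sset (cone B)" using is_sset_cone[OF B] .

sublocale P: pctx A B "cone A" f "cone_incl A"
  using A B CA f smap_cone_incl[OF A] by unfold_locales

abbreviation "PP \<equiv> pushout A B (cone A) f (cone_incl A)"

definition "inl n b = pcls A f (cone_incl A) (n, Inl b)"
definition "inr n c = pcls A f (cone_incl A) (n, Inr c)"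
definition "u1 n b = u n (inl n b)"
definition "u2 n c = u n (inr n c)"

lemma compat: "a \<in> cells A n \<Longrightarrow> cone_incl B n (f n a) = cone_map B f n (cone_incl A n a)"
  using cone_map_incl[OF A B f] by simp

lemma hat_inl: "b \<in> cells B n \<Longrightarrow> cone_hat A B f n (inl n b) = cone_incl B n b"
  unfolding cone_hat_def inl_def
  by (subst P.po_map_cls'[where ?k1.0 = "cone_incl B" and ?k2.0 = "cone_map B f"]) (auto simp: compat po_pre_Inl)

lemma hat_inr: "c \<in> cells (cone A) n \<Longrightarrow> cone_hat A B f n (inr n c) = cone_map B f n c"
  unfolding cone_hat_def inr_def
  by (subst P.po_map_cls'[where ?k1.0 = "cone_incl B" and ?k2.0 = "cone_map B f"]) (auto simp: compat po_pre_Inr)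

lemma u1_in: "b \<in> cells B n \<Longrightarrow> u1 n b \<in> cells X n"
  unfolding u1_def inl_def using smapD(1)[OF su P.inl_in] .

lemma u2_in: "c \<in> cells (cone A) n \<Longrightarrow> u2 n c \<in> cells X n"
  unfolding u2_def inr_def using smapD(1)[OF su P.inr_in] .

lemma u1_nat: "b \<in> cells B n \<Longrightarrow> \<theta> \<in> simp_ops m n \<Longrightarrow> u1 m (act B m n \<theta> b) = act X m n \<theta> (u1 n b)"
  unfolding u1_def inl_def using smapD(2)[OF su _ P.inl_in] P.act_inl by metis

lemma u2_nat: "c \<in> cells (cone A) n \<Longrightarrow> \<theta> \<in> simp_ops m n \<Longrightarrow> u2 m (cone_act A m n \<theta> c) = act X m n \<theta> (u2 n c)"
  unfolding u2_def inr_def using smapD(2)[OF su _ P.inr_in] P.act_inr cone_act_eq by metis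

lemma u12: "a \<in> cells A n \<Longrightarrow> u1 n (f n a) = u2 n (cone_incl A n a)"
  unfolding u1_def u2_def inl_def inr_def using P.pcls_gen by simp

lemma pu1: "b \<in> cells B n \<Longrightarrow> p n (u1 n b) = v n (cone_incl B n b)"
  unfolding u1_def using cm[OF P.inl_in] hat_inl unfolding inl_def by simp

lemma pu2: "c \<in> cells (cone A) n \<Longrightarrow> p n (u2 n c) = v n (cone_map B f n c)"
  unfolding u2_def using cm[OF P.inr_in] hat_inr unfolding inr_def by simp

definition "x0 = u2 0 (ptc A)"

lemma x0_in: "x0 \<in> cells X 0" unfolding x0_def using u2_in[OF ptc_in] .

lemma y0: "p 0 x0 = v 0 (ptc B)"
  unfolding x0_def using pu2[OF ptc_in] cone_map_ptc[OF A B f] by simp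

definition uA :: "nat \<Rightarrow> 'a \<Rightarrow> ('x \<times> 'w) list" where
  "uA n a = [(u2 (Suc n) (ctop A n a), undefined)]"

definition vB :: "nat \<Rightarrow> 'b \<Rightarrow> ('x \<times> 'w) list" where
  "vB n b = [(u1 n b, v (Suc n) (ctop B n b))]"

lemma smap_uA: "smap A (Xs X x0) uA"
  unfolding smap_def
proof (intro conjI allI impI)
  fix n a assume a: "a \<in> cells A n"
  have "act X 0 (Suc n) z0 (u2 (Suc n) (ctop A n a)) = x0"
    using u2_nat[OF ctop_in[OF a] z0_in] ctop_z0[OF A a] unfolding x0_def by simp
  then show "uA n a \<in> cells (Xs X x0) n"
    unfolding uA_def Xs_cells using u2_in[OF ctop_in[OF a]] by blast
next
  fix m n \<theta> a assume \<theta>: "\<theta> \<in> simp_ops m n" and a: "a \<in> cells A n"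
  show "uA m (act A m n \<theta> a) = act (Xs X x0) m n \<theta> (uA n a)"
    unfolding uA_def Xs_act using ctop_act[OF A a \<theta>] u2_nat[OF ctop_in[OF a] Cop_in[OF \<theta>]] by simp
qed

lemma smap_vB: "smap B (Ys X Y p x0) vB"
  unfolding smap_def
proof (intro conjI allI impI)
  fix n b assume b: "b \<in> cells B n"
  have 1: "act Y 0 (Suc n) z0 (v (Suc n) (ctop B n b)) = p 0 x0"
    using smapD(2)[OF sv z0_in ctop_in[OF b]] ctop_z0[OF B b] y0 by (simp add: cone_act_eq)
  have 2: "act Y n (Suc n) (d0 n) (v (Suc n) (ctop B n b)) = p n (u1 n b)"
    using smapD(2)[OF sv d0_in ctop_in[OF b]] ctop_d0[OF B b] pu1[OF b] by (simp add: cone_act_eq)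
  show "vB n b \<in> cells (Ys X Y p x0) n"
    unfolding vB_def Ys_cells using 1 2 u1_in[OF b] smapD(1)[OF sv ctop_in[OF b]] by blast
next
  fix m n \<theta> b assume \<theta>: "\<theta> \<in> simp_ops m n" and b: "b \<in> cells B n"
  show "vB m (act B m n \<theta> b) = act (Ys X Y p x0) m n \<theta> (vB n b)"
    unfolding vB_def Ys_act using ctop_act[OF B b \<theta>] u1_nat[OF b \<theta>]
      smapD(2)[OF sv Cop_in[OF \<theta>] ctop_in[OF b]] by (simp add: cone_act_eq)
qed

lemma comm_AB: "a \<in> cells A n \<Longrightarrow> qs X p n (uA n a) = vB n (f n a)"
  unfolding uA_def vB_def qs_eq
  using u2_nat[OF ctop_in d0_in] ctop_d0[OF A] u12 pu2[OF ctop_in] cone_map_ctop[OF A B f]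
  by simp

end

locale hctx = mctx A B f X Y p u v
  for A :: "'a sset" and B :: "'b sset" and f :: "nat \<Rightarrow> 'a \<Rightarrow> 'b"
    and X :: "'x sset" and Y :: "'w sset" and p u v +
  fixes h' :: "nat \<Rightarrow> 'b \<Rightarrow> ('x \<times> 'w) list"
  assumes h's: "smap B (Xs X x0) h'"
    and h'f: "\<And>n a. a \<in> cells A n \<Longrightarrow> h' n (f n a) = uA n a"
    and h'q: "\<And>n b. b \<in> cells B n \<Longrightarrow> qs X p n (h' n b) = vB n b"
begin

definition "xh n b = fst (hd (h' n b))"

lemma xh_props:
  assumes b: "b \<in> cells B n"
  shows "h' n b = [(xh n b, undefined)]" "xh n b \<in> cells X (Suc n)" "act X 0 (Suc n) z0 (xh n b) = x0"
proof -
  have "h' n b \<in> cells (Xs X x0) n" using smapD(1)[OF h's b] .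
  then obtain x where "h' n b = [(x, undefined)]" "x \<in> cells X (Suc n)" "act X 0 (Suc n) z0 x = x0"
    unfolding Xs_cells by blast
  then show "h' n b = [(xh n b, undefined)]" "xh n b \<in> cells X (Suc n)" "act X 0 (Suc n) z0 (xh n b) = x0"
    unfolding xh_def by auto
qed

lemma xh_nat:
  assumes b: "b \<in> cells B n" and \<theta>: "\<theta> \<in> simp_ops m n"
  shows "xh m (act B m n \<theta> b) = act X (Suc m) (Suc n) (Cop m \<theta>) (xh n b)"
proof -
  have "h' m (act B m n \<theta> b) = act (Xs X x0) m n \<theta> (h' n b)" using smapD(2)[OF h's \<theta> b] .
  then show ?thesis
    unfolding xh_props(1)[OF b] xh_props(1)[OF is_ssetD(1)[OF B \<theta> b]] Xs_act by simp
qed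

lemma xh_q:
  assumes b: "b \<in> cells B n"
  shows "act X n (Suc n) (d0 n) (xh n b) = u1 n b \<and> p (Suc n) (xh n b) = v (Suc n) (ctop B n b)"
proof -
  have "qs X p n (h' n b) = vB n b" using h'q[OF b] .
  then show ?thesis unfolding vB_def xh_props(1)[OF b] qs_eq by simp
qed

lemma xh_d0: "b \<in> cells B n \<Longrightarrow> act X n (Suc n) (d0 n) (xh n b) = u1 n b"
  using xh_q by blast

lemma xh_p: "b \<in> cells B n \<Longrightarrow> p (Suc n) (xh n b) = v (Suc n) (ctop B n b)"
  using xh_q by blast

lemma xh_f: "a \<in> cells A n \<Longrightarrow> xh n (f n a) = u2 (Suc n) (ctop A n a)"
  using h'f[of a n] xh_props(1)[OF smapD(1)[OF f]] unfolding uA_def by simp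

definition G :: "nat \<Rightarrow> 'b cone_rep \<Rightarrow> 'x" where
  "G m r = (case r of (_, k, bo, \<sigma>) \<Rightarrow> if k = 0 then act X m 0 \<sigma> x0 else act X m k \<sigma> (xh (k - 1) (the bo)))"

definition H :: "nat \<Rightarrow> 'b cone_elt \<Rightarrow> 'x" where
  "H m c = G m (SOME r. r \<in> c)"

lemma cone_op_0: "cone_op 0 q g \<Longrightarrow> g = z0"
  unfolding cone_op_def simp_ops_def z0_def by (auto intro!: ext) (metis neq0_conv)

lemma H_cls:
  assumes y: "(m, k, bo, \<sigma>) \<in> cone_pre B m"
  shows "H m (cls B (m, k, bo, \<sigma>)) = G m (m, k, bo, \<sigma>)"
  unfolding H_def
proof (rule conjunct2[OF cone_some_inv[OF B _ y]])
  fix m0 p' q g \<sigma>' b assume h: "m0 = m" "cone_op p' q g" "\<sigma>' \<in> simp_ops m0 p'" "1 \<le> q" "b \<in> cells B (q - 1)"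
  have g: "g \<in> simp_ops p' q" using h(2) unfolding cone_op_def by simp
  have h3: "\<sigma>' \<in> simp_ops m p'" using h(1,3) by simp
  have q: "Suc (q - 1) = q" using h(4) by simp
  have xb: "xh (q - 1) b \<in> cells X q" using xh_props(2)[OF h(5)] q by simp
  have lhs: "G m (m0, q, Some b, cmp m0 g \<sigma>') = act X m p' \<sigma>' (act X p' q g (xh (q - 1) b))"
    unfolding G_def using h(1,4) is_ssetD(3)[OF X h3 g xb] by simp
  show "G m (m0, q, Some b, cmp m0 g \<sigma>') =
       G m (m0, p', (if p' = 0 then None else Some (act B (p' - 1) (q - 1) (uncone p' g) b)), \<sigma>')"
  proof (cases "p' = 0")
    case True
    then have "g = z0" using cone_op_0 h(2) by simp
    then have "act X p' q g (xh (q - 1) b) = x0" using xh_props(3)[OF h(5)] True q by simp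
    then show ?thesis unfolding lhs using True by (simp add: G_def)
  next
    case False
    then have p': "Suc (p' - 1) = p'" by simp
    have "xh (p' - 1) (act B (p' - 1) (q - 1) (uncone p' g) b) =
          act X (Suc (p' - 1)) (Suc (q - 1)) (Cop (p' - 1) (uncone p' g)) (xh (q - 1) b)"
      using xh_nat[OF h(5) uncone_in[OF h(2)]] False by simp
    also have "\<dots> = act X p' q g (xh (q - 1) b)"
      using Cop_uncone[OF h(2)] False p' q by simp
    finally show ?thesis unfolding lhs using False by (simp add: G_def)
  qed
qed

lemma G_in:
  assumes y: "(m, k, bo, \<sigma>) \<in> cone_pre B m"
  shows "G m (m, k, bo, \<sigma>) \<in> cells X m"
proof (cases "k = 0")
  case True
  then show ?thesis using y is_ssetD(1)[OF X _ x0_in] unfolding G_def by (simp add: cone_pre_iff)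
next
  case False
  then obtain b where b: "bo = Some b" "b \<in> cells B (k - 1)" "\<sigma> \<in> simp_ops m k" using y by (auto simp: cone_pre_iff)
  have "xh (k - 1) b \<in> cells X k" using xh_props(2)[OF b(2)] False by simp
  then show ?thesis using False b is_ssetD(1)[OF X b(3)] unfolding G_def by simp
qed

lemma G_nat:
  assumes y: "(l, k, bo, \<sigma>) \<in> cone_pre B l" and \<phi>: "\<phi> \<in> simp_ops m l"
  shows "G m (m, k, bo, cmp m \<sigma> \<phi>) = act X m l \<phi> (G l (l, k, bo, \<sigma>))"
proof (cases "k = 0")
  case True
  then show ?thesis using y is_ssetD(3)[OF X \<phi> _ x0_in] unfolding G_def by (simp add: cone_pre_iff)
next
  case False
  then obtain b where b: "bo = Some b" "b \<in> cells B (k - 1)" "\<sigma> \<in> simp_ops l k" using y by (auto simp: cone_pre_iff)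
  have "xh (k - 1) b \<in> cells X k" using xh_props(2)[OF b(2)] False by simp
  then show ?thesis using False b is_ssetD(3)[OF X \<phi> b(3)] unfolding G_def by simp
qed

lemma smap_H: "smap (cone B) X H"
  unfolding smap_def cone_act_eq
proof (intro conjI allI impI)
  fix n c assume "c \<in> cells (cone B) n"
  then obtain k bo \<sigma> where y: "(n, k, bo, \<sigma>) \<in> cone_pre B n" "c = cls B (n, k, bo, \<sigma>)" by (rule cone_cellsE)
  then show "H n c \<in> cells X n" using H_cls G_in by simp
next
  fix m n \<theta> c assume \<theta>: "\<theta> \<in> simp_ops m n" and "c \<in> cells (cone B) n"
  then obtain k bo \<sigma> where y: "(n, k, bo, \<sigma>) \<in> cone_pre B n" "c = cls B (n, k, bo, \<sigma>)"
    using cone_cellsE by metis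
  have y2: "(m, k, bo, cmp m \<sigma> \<theta>) \<in> cone_pre B m"
    using y \<theta> by (auto simp: cone_pre_iff intro: cmp_closed)
  show "H m (cone_act B m n \<theta> c) = act X m n \<theta> (H n c)"
    using y y2 \<theta> by (simp add: cone_act_cls[OF B] H_cls G_nat)
qed

lemma H_hat:
  assumes x: "x \<in> cells PP n"
  shows "H n (cone_hat A B f n x) = u n x"
proof -
  obtain y where y: "y \<in> po_pre B (cone A) n" "x = pcls A f (cone_incl A) y" using P.po_cellsE[OF x] by blast
  from y(1) show ?thesis
  proof (cases rule: po_pre_cases)
    case (1 b)
    then have "cone_hat A B f n x = cls B (n, Suc n, Some b, d0 n)"
      using y hat_inl[OF 1(2)] cone_incl_eq unfolding inl_def by simp
    moreover have "(n, Suc n, Some b, d0 n) \<in> cone_pre B n" using 1 d0_in by (simp add: cone_pre_iff)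
    ultimately have "H n (cone_hat A B f n x) = act X n (Suc n) (d0 n) (xh n b)"
      using H_cls by (simp add: G_def)
    also have "\<dots> = u n x" using xh_d0[OF 1(2)] y 1 unfolding u1_def inl_def by simp
    finally show ?thesis .
  next
    case (2 c)
    then have hc: "cone_hat A B f n x = cone_map B f n c" and ux: "u n x = u2 n c"
      using y hat_inr unfolding inr_def u2_def by auto
    obtain k ao \<sigma> where c: "(n, k, ao, \<sigma>) \<in> cone_pre A n" "c = cls A (n, k, ao, \<sigma>)"
      using cone_cellsE[OF 2(2)] by metis
    have cm': "cone_map B f n c = cls B (n, k, map_option (f (k - 1)) ao, \<sigma>)"
      using cone_map_cls[OF A B f c(1)] c(2) by simp
    have pre: "(n, k, map_option (f (k - 1)) ao, \<sigma>) \<in> cone_pre B n"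
      using c(1) smapD(1)[OF f] by (auto simp: cone_pre_iff split: if_splits)
    show ?thesis
    proof (cases "k = 0")
      case True
      then have \<sigma>: "\<sigma> \<in> simp_ops n 0" and ao: "ao = None" using c(1) by (auto simp: cone_pre_iff)
      have "c = cone_act A n 0 \<sigma> (ptc A)" using ptc_act[OF A \<sigma>] c(2) True ao by simp
      then have "u2 n c = act X n 0 \<sigma> x0" using u2_nat[OF ptc_in \<sigma>] unfolding x0_def by simp
      then show ?thesis using hc ux cm' pre H_cls True by (simp add: G_def)
    next
      case False
      then obtain a where a: "ao = Some a" "a \<in> cells A (k - 1)" and \<sigma>: "\<sigma> \<in> simp_ops n k"
        using c(1) by (auto simp: cone_pre_iff)
      have k: "Suc (k - 1) = k" using False by simp
      have "H n (cone_hat A B f n x) = act X n k \<sigma> (xh (k - 1) (f (k - 1) a))"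
        using hc cm' pre H_cls False a by (simp add: G_def)
      also have "\<dots> = act X n k \<sigma> (u2 k (ctop A (k - 1) a))" using xh_f[OF a(2)] k by simp
      also have "\<dots> = u2 n (cone_act A n k \<sigma> (ctop A (k - 1) a))"
        using u2_nat[OF ctop_in[OF a(2)], of \<sigma> n] \<sigma> k by simp
      also have "\<dots> = u2 n c"
        using ctop_act_any[OF A a(2), of \<sigma> n] \<sigma> k c(2) a(1) by simp
      finally show ?thesis using ux by simp
    qed
  qed
qed

lemma p_H:
  assumes c: "c \<in> cells (cone B) n"
  shows "p n (H n c) = v n c"
proof -
  obtain k bo \<sigma> where y: "(n, k, bo, \<sigma>) \<in> cone_pre B n" "c = cls B (n, k, bo, \<sigma>)"
    using cone_cellsE[OF c] by metis
  show ?thesis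
  proof (cases "k = 0")
    case True
    then have \<sigma>: "\<sigma> \<in> simp_ops n 0" and bo: "bo = None" using y(1) by (auto simp: cone_pre_iff)
    have "p n (H n c) = p n (act X n 0 \<sigma> x0)" using y H_cls True by (simp add: G_def)
    also have "\<dots> = act Y n 0 \<sigma> (v 0 (ptc B))" using smapD(2)[OF p \<sigma> x0_in] y0 by simp
    also have "\<dots> = v n (cone_act B n 0 \<sigma> (ptc B))" using smapD(2)[OF sv \<sigma> ptc_in] by (simp add: cone_act_eq)
    also have "\<dots> = v n c" using ptc_act[OF B \<sigma>] y True bo by simp
    finally show ?thesis .
  next
    case False
    then obtain b where b: "bo = Some b" "b \<in> cells B (k - 1)" and \<sigma>: "\<sigma> \<in> simp_ops n k"
      using y(1) by (auto simp: cone_pre_iff)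
    have k: "Suc (k - 1) = k" using False by simp
    have xb: "xh (k - 1) b \<in> cells X k" using xh_props(2)[OF b(2)] k by simp
    have "p n (H n c) = p n (act X n k \<sigma> (xh (k - 1) b))" using y H_cls False b by (simp add: G_def)
    also have "\<dots> = act Y n k \<sigma> (v k (ctop B (k - 1) b))"
      using smapD(2)[OF p \<sigma> xb] xh_p[OF b(2)] k by simp
    also have "\<dots> = v n (cone_act B n k \<sigma> (ctop B (k - 1) b))"
      using smapD(2)[OF sv \<sigma>, of "ctop B (k - 1) b"] ctop_in[OF b(2)] k by (simp add: cone_act_eq)
    also have "\<dots> = v n c" using ctop_act_any[OF B b(2), of \<sigma> n] \<sigma> k y(2) b(1) by simp
    finally show ?thesis .
  qed
qed

end

theorem theorem4p7:
  fixes A :: "'a sset" and B :: "'b sset" and f :: "nat \<Rightarrow> 'a \<Rightarrow> 'b"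
  assumes "anodyne TYPE(('x \<times> 'w) list) TYPE(('x \<times> 'w) list) A B f"
  shows "right_anodyne TYPE('x) TYPE('w)
           (pushout A B (cone A) f (cone_incl A)) (cone B) (cone_hat A B f)"
proof -
  have A: "is_sset A" and B: "is_sset B" and f: "smap A B f"
    and an: "\<And>(X' :: ('x \<times> 'w) list sset) (Y' :: ('x \<times> 'w) list sset) q. kan_fibration X' Y' q \<Longrightarrow> llp A B f X' Y' q"
    using assms unfolding anodyne_def by auto
  interpret P: pctx A B "cone A" f "cone_incl A"
    using A B is_sset_cone[OF A] f smap_cone_incl[OF A] by unfold_locales
  have compat: "\<And>n a. a \<in> cells A n \<Longrightarrow> cone_incl B n (f n a) = cone_map B f n (cone_incl A n a)"
    using cone_map_incl[OF A B f] by simp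
  have sh: "smap (pushout A B (cone A) f (cone_incl A)) (cone B) (cone_hat A B f)"
    unfolding cone_hat_def
    by (rule P.smap_po_map[OF smap_cone_incl[OF B] smap_cone_map[OF A B f] compat])
  show ?thesis
    unfolding right_anodyne_def
  proof (intro conjI allI impI)
    show "is_sset (pushout A B (cone A) f (cone_incl A))" by (rule P.is_sset_pushout)
    show "is_sset (cone B)" by (rule is_sset_cone[OF B])
    show "smap (pushout A B (cone A) f (cone_incl A)) (cone B) (cone_hat A B f)" by (rule sh)
    fix X :: "'x sset" and Y :: "'w sset" and p
    assume rf: "right_fibration X Y p"
    show "llp (pushout A B (cone A) f (cone_incl A)) (cone B) (cone_hat A B f) X Y p"
      unfolding llp_def
    proof (intro allI impI)
      fix u v
      assume su: "smap (pushout A B (cone A) f (cone_incl A)) X u" and sv: "smap (cone B) Y v"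
        and cm: "\<forall>n a. a \<in> cells (pushout A B (cone A) f (cone_incl A)) n \<longrightarrow>
                   p n (u n a) = v n (cone_hat A B f n a)"
      interpret M: mctx A B f X Y p u v
        using A B f an rf su sv cm by unfold_locales auto
      have kq: "kan_fibration (Xs X M.x0 :: ('x \<times> 'w) list sset) (Ys X Y p M.x0) (qs X p)"
        by (rule kan_qs[OF rf M.x0_in])
      have "llp A B f (Xs X M.x0 :: ('x \<times> 'w) list sset) (Ys X Y p M.x0) (qs X p)" by (rule an[OF kq])
      then obtain h' where h': "smap B (Xs X M.x0 :: ('x \<times> 'w) list sset) h'"
        "\<And>n a. a \<in> cells A n \<Longrightarrow> h' n (f n a) = M.uA n a"
        "\<And>n b. b \<in> cells B n \<Longrightarrow> qs X p n (h' n b) = M.vB n b"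
        unfolding llp_def using M.smap_uA M.smap_vB M.comm_AB by blast
      interpret Hc: hctx A B f X Y p u v h'
        using h' by unfold_locales auto
      show "\<exists>h. smap (cone B) X h \<and>
            (\<forall>n a. a \<in> cells (pushout A B (cone A) f (cone_incl A)) n \<longrightarrow> h n (cone_hat A B f n a) = u n a) \<and>
            (\<forall>n b. b \<in> cells (cone B) n \<longrightarrow> p n (h n b) = v n b)"
        using Hc.smap_H Hc.H_hat Hc.p_H by blast
    qed
  qed
qed


end
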